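(* Let $s\ge2$, $k,K\in\mathbb{N}$ and $0<R\le1$. For every $0<\delta<\frac{1}{s-1}$ and $0\le\alpha<1$ there is a constant $\lambda=\lambda(s,k,K,R,\delta,\alpha)>0$ such that for every $(s,k,K)$-two layer system $X$ with $R_{\operatorname{nint}}\ge R$, if $X$ is a $\lambda$-expanding HDE-System, then $X$ has the $((\delta,\alpha),\varepsilon_0)$-unique neighbor expansion property with $$\varepsilon_0=\min\left\{\frac{R^2(1-\alpha)(1-(s-1)\delta)}{4}\cdot\frac1K,\ \frac{7(1-\alpha)^2(1-(s-1)\delta)^3}{64(1+15(s-1)\delta)s^3(s-1)^4}\cdot\frac1{k^2}\right\}.$$
   Context: An $(s,k,K)$-two layer system is a triple $X=(V,E,T)$ where: $V$ is a finite set; $E\subseteq 2^V$ with $|\tau|=k$ for all $\tau\in E$ and $\bigcup_{\tau\in E}\tau=V$; $T\subseteq 2^E$ with $|\sigma|=K$ for all $\sigma\in T$ and $\bigcup_{\sigma\in T}\sigma=E$. Write $v\in\sigma$ if $v\in\tau$ for some $\tau\in\sigma$; it is required that $2\le|\{\tau\in\sigma:v\in\tau\}|\le s$ for all $\sigma\in T$, $v\in\sigma$. A positive $w:T\to\mathbb{R}_{>0}$ is fixed and extended by $w(\tau)=\sum_{\sigma\ni\tau}w(\sigma)$ ($\tau\in E$), $w(v)=\sum_{\sigma\in T,v\in\sigma}w(\sigma)$, $w(B)=\sum_{\eta\in B}w(\eta)$. Graphs: for a weighted graph $(V,E,m)$, $m(v)=\sum_{e\ni v}m(e)$, $m(U)=\sum_{v\in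 U}m(v)$, $m(U_1,U_2)=\sum_{(u_1,u_2)\in U_1\times U_2,\{u_1,u_2\}\in E}m(\{u_1,u_2\})$, $h_G=\min_{\emptyset\ne U\subsetneq V}\frac{m(U,V\setminus U)m(V)}{m(U)m(V\setminus U)}$; $G$ is a $\lambda$-expander if $1-h_G\le\lambda$. The ground graph: vertex set $V$, distinct $u,v$ adjacent iff some $\tau\in E$ contains both, weight $\sum_{\tau\in E,u,v\in\tau}w(\tau)$. The link of $v$: vertex set $E_v=\{\tau\in E:v\in\tau\}$, distinct $\tau_1,\tau_2$ adjacent iff some $\sigma\in T$ contains both, weight $m_v(\{\tau_1,\tau_2\})=\sum_{\sigma\in T,\tau_1,\tau_2\in\sigma}w(\sigma)$; $m_v(\tau)$ is the sum of weights of link edges at $\tau$, $m_v(B)=\sum_{\tau\in B}m_v(\tau)$. The non-intersecting graph: vertex set $E$, edges $\{\tau,\tau'\}$ with $\tau\cap\tau'=\emptyset$ and some $\sigma\in T$ containing both, weight $\sum_{\sigma\in T,\tau,\tau'\in\sigma}w(\sigma)$. $R_{\operatorname{nint}}=Q^{\min}_{\operatorname{nint}}/Q^{\max}_{\operatorname{nint}}$, where $Q^{\max}_{\operatorname{nint}}$ (resp. $Q^{\min}_{\operatorname{nint}}$) is the maximum (resp. minimum) over $\tau\in E$, $\sigma\in T$ with $\tau\in\sigma$, of the number of $\tau'\in\sigma$ disjoint from $\tau$. $X$ is a $\lambda$-expanding HDE-System if the ground graph and all links are $\lambda$-expanders and the non-intersecting graph either has no edges or is a $\lambda$-expander. Local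 smallness: for $A\subseteq E$, $A_v=A\cap E_v$; $v$ is $\delta$-large w.r.t. $A$ if $m_v(A_v)/m_v(E_v)\ge\delta$; $A$ is $(\delta,\alpha)$-locally small if $\sum_{v\ \delta\text{-large}}m_v(A_v)\le\alpha\,w(A)$. $X$ has the $((\delta,\alpha),\varepsilon_0)$-unique neighbor expansion property if every non-empty $(\delta,\alpha)$-locally small $A\subseteq E$ with $w(A)/w(E)<\varepsilon_0$ admits $\sigma\in T$ with $|A\cap\sigma|=1$. *)

theory Defs
  imports Complex_Main 
begin

text \<open>Vertices have type 'v; a face tau is a 'v set; a top face sigma is a 'v set set.\<close>

definition two_layer_system ::
  "nat \<Rightarrow> nat \<Rightarrow> nat \<Rightarrow> 'v set \<Rightarrow> 'v set set \<Rightarrow> 'v set set set \<Rightarrow> bool" where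
  "two_layer_system s k K V E T \<longleftrightarrow>
     finite V \<and>
     E \<subseteq> Pow V \<and> (\<forall>\<tau>\<in>E. card \<tau> = k) \<and> \<Union>E = V \<and>
     T \<subseteq> Pow E \<and> (\<forall>\<sigma>\<in>T. card \<sigma> = K) \<and> \<Union>T = E \<and>
     (\<forall>\<sigma>\<in>T. \<forall>v\<in>\<Union>\<sigma>. 2 \<le> card {\<tau>\<in>\<sigma>. v \<in> \<tau>} \<and> card {\<tau>\<in>\<sigma>. v \<in> \<tau>} \<le> s)"

definition wE :: "'v set set set \<Rightarrow> ('v set set \<Rightarrow> real) \<Rightarrow> 'v set \<Rightarrow> real" where
  "wE T w \<tau> = (\<Sum>\<sigma>\<in>{\<sigma>\<in>T. \<tau> \<in> \<sigma>}. w \<sigma>)"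

definition wV :: "'v set set set \<Rightarrow> ('v set set \<Rightarrow> real) \<Rightarrow> 'v \<Rightarrow> real" where
  "wV T w v = (\<Sum>\<sigma>\<in>{\<sigma>\<in>T. v \<in> \<Union>\<sigma>}. w \<sigma>)"

definition wSet :: "'v set set set \<Rightarrow> ('v set set \<Rightarrow> real) \<Rightarrow> 'v set set \<Rightarrow> real" where
  "wSet T w A = (\<Sum>\<tau>\<in>A. wE T w \<tau>)"

text \<open>A weighted graph is given by a finite vertex set U and a symmetric weight function
  m, where m x y is the weight of the edge {x,y} (0 if x,y are not adjacent or x = y).\<close>

definition gdeg :: "'a set \<Rightarrow> ('a \<Rightarrow> 'a \<Rightarrow> real) \<Rightarrow> 'a \<Rightarrow> real" where
  "gdeg U m x = (\<Sum>y\<in>U. m x y)"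

definition gvol :: "'a set \<Rightarrow> ('a \<Rightarrow> 'a \<Rightarrow> real) \<Rightarrow> 'a set \<Rightarrow> real" where
  "gvol U m B = (\<Sum>x\<in>B. gdeg U m x)"

definition gcut :: "('a \<Rightarrow> 'a \<Rightarrow> real) \<Rightarrow> 'a set \<Rightarrow> 'a set \<Rightarrow> real" where
  "gcut m U1 U2 = (\<Sum>(x,y)\<in>U1 \<times> U2. m x y)"

definition cheeger :: "'a set \<Rightarrow> ('a \<Rightarrow> 'a \<Rightarrow> real) \<Rightarrow> real" where
  "cheeger U m = Min {gcut m B (U - B) * gvol U m U / (gvol U m B * gvol U m (U - B)) | B.
                        B \<noteq> {} \<and> B \<subset> U}"

definition expander :: "'a set \<Rightarrow> ('a \<Rightarrow> 'a \<Rightarrow> real) \<Rightarrow> real \<Rightarrow> bool" where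
  "expander U m lam \<longleftrightarrow> 1 - cheeger U m \<le> lam"

definition ground_w :: "'v set set \<Rightarrow> 'v set set set \<Rightarrow> ('v set set \<Rightarrow> real) \<Rightarrow> 'v \<Rightarrow> 'v \<Rightarrow> real" where
  "ground_w E T w u v = (if u \<noteq> v then (\<Sum>\<tau>\<in>{\<tau>\<in>E. u \<in> \<tau> \<and> v \<in> \<tau>}. wE T w \<tau>) else 0)"

definition Ev :: "'v set set \<Rightarrow> 'v \<Rightarrow> 'v set set" where
  "Ev E v = {\<tau>\<in>E. v \<in> \<tau>}"

definition link_w :: "'v set set set \<Rightarrow> ('v set set \<Rightarrow> real) \<Rightarrow> 'v set \<Rightarrow> 'v set \<Rightarrow> real" where
  "link_w T w \<tau>1 \<tau>2 = (if \<tau>1 \<noteq> \<tau>2 then (\<Sum>\<sigma>\<in>{\<sigma>\<in>T. \<tau>1 \<in> \<sigma> \<and> \<tau>2 \<in> \<sigma>}. w \<sigma>) else 0)"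

definition link_vol :: "'v set set \<Rightarrow> 'v set set set \<Rightarrow> ('v set set \<Rightarrow> real) \<Rightarrow> 'v \<Rightarrow> 'v set set \<Rightarrow> real" where
  "link_vol E T w v B = gvol (Ev E v) (link_w T w) B"

definition nint_w :: "'v set set set \<Rightarrow> ('v set set \<Rightarrow> real) \<Rightarrow> 'v set \<Rightarrow> 'v set \<Rightarrow> real" where
  "nint_w T w \<tau>1 \<tau>2 = (if \<tau>1 \<noteq> \<tau>2 \<and> \<tau>1 \<inter> \<tau>2 = {}
                          then (\<Sum>\<sigma>\<in>{\<sigma>\<in>T. \<tau>1 \<in> \<sigma> \<and> \<tau>2 \<in> \<sigma>}. w \<sigma>) else 0)"

definition nint_has_edges :: "'v set set set \<Rightarrow> bool" where
  "nint_has_edges T \<longleftrightarrow> (\<exists>\<sigma>\<in>T. \<exists>\<tau>1\<in>\<sigma>. \<exists>\<tau>2\<in>\<sigma>. \<tau>1 \<noteq> \<tau>2 \<and> \<tau>1 \<inter> \<tau>2 = {})"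

definition Qnint :: "'v set \<Rightarrow> 'v set set \<Rightarrow> nat" where
  "Qnint \<tau> \<sigma> = card {\<tau>'\<in>\<sigma>. \<tau> \<inter> \<tau>' = {}}"

definition R_nint :: "'v set set set \<Rightarrow> real" where
  "R_nint T = real (Min {Qnint \<tau> \<sigma> | \<tau> \<sigma>. \<sigma> \<in> T \<and> \<tau> \<in> \<sigma>})
            / real (Max {Qnint \<tau> \<sigma> | \<tau> \<sigma>. \<sigma> \<in> T \<and> \<tau> \<in> \<sigma>})"

definition HDE_system ::
  "'v set \<Rightarrow> 'v set set \<Rightarrow> 'v set set set \<Rightarrow> ('v set set \<Rightarrow> real) \<Rightarrow> real \<Rightarrow> bool" where
  "HDE_system V E T w lam \<longleftrightarrow>
     expander V (ground_w E T w) lam \<and>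
     (\<forall>v\<in>V. expander (Ev E v) (link_w T w) lam) \<and>
     (\<not> nint_has_edges T \<or> expander E (nint_w T w) lam)"

definition delta_large ::
  "'v set set \<Rightarrow> 'v set set set \<Rightarrow> ('v set set \<Rightarrow> real) \<Rightarrow> real \<Rightarrow> 'v set set \<Rightarrow> 'v \<Rightarrow> bool" where
  "delta_large E T w \<delta> A v \<longleftrightarrow>
     link_vol E T w v (A \<inter> Ev E v) / link_vol E T w v (Ev E v) \<ge> \<delta>"

definition locally_small ::
  "'v set \<Rightarrow> 'v set set \<Rightarrow> 'v set set set \<Rightarrow> ('v set set \<Rightarrow> real) \<Rightarrow> real \<Rightarrow> real \<Rightarrow> 'v set set \<Rightarrow> bool" where
  "locally_small V E T w \<delta> \<alpha> A \<longleftrightarrow>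
     (\<Sum>v\<in>{v\<in>V. delta_large E T w \<delta> A v}. link_vol E T w v (A \<inter> Ev E v)) \<le> \<alpha> * wSet T w A"

definition unique_neighbor_expansion ::
  "'v set \<Rightarrow> 'v set set \<Rightarrow> 'v set set set \<Rightarrow> ('v set set \<Rightarrow> real) \<Rightarrow> real \<Rightarrow> real \<Rightarrow> real \<Rightarrow> bool" where
  "unique_neighbor_expansion V E T w \<delta> \<alpha> \<epsilon>0 \<longleftrightarrow>
     (\<forall>A. A \<subseteq> E \<longrightarrow> A \<noteq> {} \<longrightarrow> locally_small V E T w \<delta> \<alpha> A \<longrightarrow>
          wSet T w A / wSet T w E < \<epsilon>0 \<longrightarrow> (\<exists>\<sigma>\<in>T. card (A \<inter> \<sigma>) = 1))"

end

theory Submission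
  imports Defs
begin

lemma gvol_split:
  assumes "finite U" "B \<subseteq> U"
  shows "gvol U m B = (\<Sum>x\<in>B. \<Sum>y\<in>B. m x y) + gcut m B (U - B)"
proof -
  have fB: "finite B" using assms finite_subset by blast
  have "gvol U m B = (\<Sum>x\<in>B. (\<Sum>y\<in>B. m x y) + (\<Sum>y\<in>U - B. m x y))"
    unfolding gvol_def gdeg_def
    by (rule sum.cong, simp, metis add.commute assms sum.subset_diff)
  also have "\<dots> = (\<Sum>x\<in>B. \<Sum>y\<in>B. m x y) + (\<Sum>x\<in>B. \<Sum>y\<in>U - B. m x y)"
    by (simp add: sum.distrib)
  also have "(\<Sum>x\<in>B. \<Sum>y\<in>U - B. m x y) = gcut m B (U - B)"
    unfolding gcut_def using fB assms(1)
    by (simp add: sum.cartesian_product)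
  finally show ?thesis .
qed

lemma gvol_diff:
  assumes "finite U" "B \<subseteq> U"
  shows "gvol U m U = gvol U m B + gvol U m (U - B)"
  unfolding gvol_def using assms by (metis add.commute sum.subset_diff)

lemma gvol_nonneg:
  assumes "\<And>x y. 0 \<le> m x y"
  shows "0 \<le> gvol U m B"
  unfolding gvol_def gdeg_def using assms by (simp add: sum_nonneg)

lemma gcut_nonneg:
  assumes "\<And>x y. 0 \<le> m x y"
  shows "0 \<le> gcut m B C"
  unfolding gcut_def using assms by (simp add: sum_nonneg split_beta)

lemma aux1: "0 \<le> (l::real) \<Longrightarrow> 0 \<le> b \<Longrightarrow> (1 - l) * b \<le> b"
  by (simp add: algebra_simps)

lemma aux2: "0 < (u::real) \<Longrightarrow> a * u \<le> b * (l * u + b) \<Longrightarrow> a \<le> b * (l + b / u)"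
proof -
  assume u: "0 < u" and h: "a * u \<le> b * (l * u + b)"
  have "b * (l + b / u) = b * (l * u + b) / u" using u by (simp add: field_simps)
  thus ?thesis using h u by (simp add: pos_le_divide_eq)
qed

lemma expander_int:
  fixes m :: "'a \<Rightarrow> 'a \<Rightarrow> real"
  assumes fin: "finite U" and nn: "\<And>x y. 0 \<le> m x y" and ex: "expander U m lam"
    and lam: "0 \<le> lam" "lam < 1" and BU: "B \<subseteq> U"
  shows "(\<Sum>x\<in>B. \<Sum>y\<in>B. m x y) \<le> gvol U m B * (lam + gvol U m B / gvol U m U)"
proof -
  let ?I = "(\<Sum>x\<in>B. \<Sum>y\<in>B. m x y)"
  let ?vB = "gvol U m B" and ?vU = "gvol U m U" and ?vC = "gvol U m (U - B)"
  let ?c = "gcut m B (U - B)"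
  have split: "?vB = ?I + ?c" using gvol_split[OF fin BU] .
  have vU: "?vU = ?vB + ?vC" using gvol_diff[OF fin BU] .
  have nB: "0 \<le> ?vB" "0 \<le> ?vC" "0 \<le> ?c" using gvol_nonneg[of m, OF nn] gcut_nonneg[of m, OF nn] by auto
  show ?thesis
  proof (cases "B = {} \<or> B = U")
    case True
    then show ?thesis
    proof
      assume "B = {}" thus ?thesis by (simp add: gvol_def)
    next
      assume BU': "B = U"
      have "?c = 0" using BU' by (simp add: gcut_def)
      hence I: "?I = ?vB" using split by simp
      show ?thesis
      proof (cases "?vU = 0")
        case True thus ?thesis using I BU' by simp
      next
        case False
        hence "?vB / ?vU = 1" using BU' by simp
        thus ?thesis using I nB lam by (simp add: algebra_simps)
      qed
    qed
  next
    case False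
    hence ne: "B \<noteq> {}" "B \<subset> U" using BU by blast+
    let ?S = "{gcut m B (U - B) * gvol U m U / (gvol U m B * gvol U m (U - B)) | B.
                        B \<noteq> {} \<and> B \<subset> U}"
    have finS: "finite ?S"
    proof (rule finite_subset)
      show "?S \<subseteq> (\<lambda>B. gcut m B (U - B) * gvol U m U / (gvol U m B * gvol U m (U - B))) ` Pow U"
        by blast
      show "finite ((\<lambda>B. gcut m B (U - B) * gvol U m U / (gvol U m B * gvol U m (U - B))) ` Pow U)"
        using fin by simp
    qed
    have "?c * ?vU / (?vB * ?vC) \<in> ?S" using ne by blast
    hence "cheeger U m \<le> ?c * ?vU / (?vB * ?vC)" unfolding cheeger_def using finS Min_le by blast
    moreover have "1 - lam \<le> cheeger U m" using ex unfolding expander_def by simp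
    ultimately have ge: "1 - lam \<le> ?c * ?vU / (?vB * ?vC)" by simp
    hence pos: "0 < ?c * ?vU / (?vB * ?vC)" using lam by simp
    have d0: "?vB * ?vC \<noteq> 0" using pos by auto
    hence dpos: "0 < ?vB * ?vC" using nB by (simp add: less_le)
    have vUpos: "0 < ?vU" using dpos nB vU by (smt (verit) mult_nonneg_nonneg mult_eq_0_iff)
    have key: "(1 - lam) * (?vB * ?vC) \<le> ?c * ?vU"
      using ge dpos by (simp add: pos_le_divide_eq)
    have "?I = ?vB - ?c" using split by simp
    have "?I * ?vU \<le> ?vB * (lam * ?vU + ?vB)"
    proof -
      have "?I * ?vU = ?vB * ?vU - ?c * ?vU" using split by (simp add: algebra_simps)
      also have "\<dots> \<le> ?vB * ?vU - (1 - lam) * (?vB * ?vC)" using key by simp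
      also have "\<dots> = ?vB * (lam * ?vU + (1 - lam) * ?vB)" using vU by (simp add: algebra_simps)
      also have "\<dots> \<le> ?vB * (lam * ?vU + ?vB)" using nB lam
        using aux1[of lam ?vB] by (intro mult_left_mono) auto
      finally show ?thesis .
    qed
    thus ?thesis using vUpos aux2 by blast
  qed
qed

locale TLS =
  fixes s k K :: nat and V :: "'v set" and E :: "'v set set" and T :: "'v set set set"
    and w :: "'v set set \<Rightarrow> real"
  assumes tls: "two_layer_system s k K V E T" and wpos: "\<And>\<sigma>. \<sigma> \<in> T \<Longrightarrow> 0 < w \<sigma>"
begin

lemma tlsD: "finite V" "E \<subseteq> Pow V" "\<forall>\<tau>\<in>E. card \<tau> = k" "\<Union>E = V" "T \<subseteq> Pow E"
   "\<forall>\<sigma>\<in>T. card \<sigma> = K" "\<Union>T = E"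
   "\<forall>\<sigma>\<in>T. \<forall>v\<in>\<Union>\<sigma>. 2 \<le> card {\<tau>\<in>\<sigma>. v \<in> \<tau>} \<and> card {\<tau>\<in>\<sigma>. v \<in> \<tau>} \<le> s"
  using tls unfolding two_layer_system_def by simp_all
lemma finV: "finite V" using tlsD(1) .
lemma EV: "E \<subseteq> Pow V" using tlsD(2) .
lemma cardE: "\<tau> \<in> E \<Longrightarrow> card \<tau> = k" using tlsD(3) by (rule bspec)
lemma TE: "T \<subseteq> Pow E" using tlsD(5) .
lemma cardT: "\<sigma> \<in> T \<Longrightarrow> card \<sigma> = K" using tlsD(6) by (rule bspec)
lemma UT: "\<Union>T = E" using tlsD(7) .
lemma cnt: "\<sigma> \<in> T \<Longrightarrow> v \<in> \<Union>\<sigma> \<Longrightarrow> 2 \<le> card {\<tau>\<in>\<sigma>. v \<in> \<tau>} \<and> card {\<tau>\<in>\<sigma>. v \<in> \<tau>} \<le> s"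
  using tlsD(8) by blast
lemma finE: "finite E" using finV EV by (simp add: finite_subset)
lemma finT: "finite T" using finE TE by (simp add: finite_subset)
lemma sigE: "\<sigma> \<in> T \<Longrightarrow> \<sigma> \<subseteq> E" using TE by blast
lemma finsig: "\<sigma> \<in> T \<Longrightarrow> finite \<sigma>" using sigE finE finite_subset by blast
lemma tauV: "\<tau> \<in> E \<Longrightarrow> \<tau> \<subseteq> V" using EV by blast
lemma fintau: "\<tau> \<in> E \<Longrightarrow> finite \<tau>" using tauV finV finite_subset by blast

abbreviation wt where "wt \<equiv> wE T w"

lemma wt_nonneg: "0 \<le> wt \<tau>"
  unfolding wE_def by (intro sum_nonneg) (simp add: wpos less_imp_le)

lemma wt_pos: assumes "\<tau> \<in> E" shows "0 < wt \<tau>"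
proof -
  obtain \<sigma> where s: "\<sigma> \<in> T" "\<tau> \<in> \<sigma>" using assms UT by blast
  have fin: "finite {\<sigma> \<in> T. \<tau> \<in> \<sigma>}" using finT by simp
  have "w \<sigma> \<le> wt \<tau>" unfolding wE_def
    using s fin wpos by (intro member_le_sum) (auto simp: less_imp_le)
  thus ?thesis using wpos[OF s(1)] by simp
qed

lemma wSet_nonneg: "0 \<le> wSet T w A" unfolding wSet_def by (simp add: sum_nonneg wt_nonneg)

lemma link_deg:
  assumes tE: "\<tau> \<in> E" and vt: "v \<in> \<tau>"
  shows "gdeg (Ev E v) (link_w T w) \<tau> = (\<Sum>\<sigma>\<in>{\<sigma>\<in>T. \<tau> \<in> \<sigma>}. w \<sigma> * (real (card {\<tau>'\<in>\<sigma>. v \<in> \<tau>'}) - 1))"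
proof -
  have finEv: "finite (Ev E v)" unfolding Ev_def using finE by simp
  have "gdeg (Ev E v) (link_w T w) \<tau> =
        (\<Sum>\<tau>2\<in>Ev E v. \<Sum>\<sigma>\<in>T. if \<tau> \<noteq> \<tau>2 \<and> \<tau> \<in> \<sigma> \<and> \<tau>2 \<in> \<sigma> then w \<sigma> else 0)"
    unfolding gdeg_def link_w_def
    by (rule sum.cong) (auto simp: sum.inter_filter[OF finT])
  also have "\<dots> = (\<Sum>\<sigma>\<in>T. \<Sum>\<tau>2\<in>Ev E v. if \<tau> \<noteq> \<tau>2 \<and> \<tau> \<in> \<sigma> \<and> \<tau>2 \<in> \<sigma> then w \<sigma> else 0)"
    by (rule sum.swap)
  also have "\<dots> = (\<Sum>\<sigma>\<in>T. if \<tau> \<in> \<sigma> then w \<sigma> * (real (card {\<tau>'\<in>\<sigma>. v \<in> \<tau>'}) - 1) else 0)"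
  proof (rule sum.cong)
    fix \<sigma> assume sT: "\<sigma> \<in> T"
    show "(\<Sum>\<tau>2\<in>Ev E v. if \<tau> \<noteq> \<tau>2 \<and> \<tau> \<in> \<sigma> \<and> \<tau>2 \<in> \<sigma> then w \<sigma> else 0) =
          (if \<tau> \<in> \<sigma> then w \<sigma> * (real (card {\<tau>'\<in>\<sigma>. v \<in> \<tau>'}) - 1) else 0)"
    proof (cases "\<tau> \<in> \<sigma>")
      case True
      have eq: "{\<tau>2 \<in> Ev E v. \<tau> \<noteq> \<tau>2 \<and> \<tau>2 \<in> \<sigma>} = {\<tau>'\<in>\<sigma>. v \<in> \<tau>'} - {\<tau>}"
        using sigE[OF sT] unfolding Ev_def by blast
      have fin: "finite {\<tau>'\<in>\<sigma>. v \<in> \<tau>'}" using finsig[OF sT] by simp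
      have inn: "\<tau> \<in> {\<tau>'\<in>\<sigma>. v \<in> \<tau>'}" using True vt by simp
      have c: "card ({\<tau>'\<in>\<sigma>. v \<in> \<tau>'} - {\<tau>}) = card {\<tau>'\<in>\<sigma>. v \<in> \<tau>'} - 1"
        using fin inn by simp
      have c1: "0 < card {\<tau>'\<in>\<sigma>. v \<in> \<tau>'}" using fin inn card_gt_0_iff by blast
      have "(\<Sum>\<tau>2\<in>Ev E v. if \<tau> \<noteq> \<tau>2 \<and> \<tau> \<in> \<sigma> \<and> \<tau>2 \<in> \<sigma> then w \<sigma> else 0) =
            (\<Sum>\<tau>2\<in>{\<tau>2 \<in> Ev E v. \<tau> \<noteq> \<tau>2 \<and> \<tau>2 \<in> \<sigma>}. w \<sigma>)"
        using True sum.inter_filter[OF finEv, of "\<lambda>_. w \<sigma>" "\<lambda>\<tau>2. \<tau> \<noteq> \<tau>2 \<and> \<tau>2 \<in> \<sigma>"] by simp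
      also have "\<dots> = w \<sigma> * real (card {\<tau>'\<in>\<sigma>. v \<in> \<tau>'} - 1)" using c by (simp add: eq)
      finally show ?thesis using True c1 by (simp add: of_nat_diff)
    qed simp
  qed simp
  also have "\<dots> = (\<Sum>\<sigma>\<in>{\<sigma>\<in>T. \<tau> \<in> \<sigma>}. w \<sigma> * (real (card {\<tau>'\<in>\<sigma>. v \<in> \<tau>'}) - 1))"
    by (simp add: sum.inter_filter[OF finT])
  finally show ?thesis .
qed

lemma link_deg_bounds:
  assumes tE: "\<tau> \<in> E" and vt: "v \<in> \<tau>"
  shows "wt \<tau> \<le> gdeg (Ev E v) (link_w T w) \<tau>"
    and "gdeg (Ev E v) (link_w T w) \<tau> \<le> (real s - 1) * wt \<tau>"
proof -
  have cb: "1 \<le> real (card {\<tau>'\<in>\<sigma>. v \<in> \<tau>'}) - 1 \<and> real (card {\<tau>'\<in>\<sigma>. v \<in> \<tau>'}) - 1 \<le> real s - 1"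
    if "\<sigma> \<in> T" "\<tau> \<in> \<sigma>" for \<sigma>
  proof -
    have "v \<in> \<Union>\<sigma>" using that vt by blast
    hence "2 \<le> card {\<tau>'\<in>\<sigma>. v \<in> \<tau>'} \<and> card {\<tau>'\<in>\<sigma>. v \<in> \<tau>'} \<le> s" using cnt that(1) by blast
    thus ?thesis by (simp add: of_nat_le_iff[symmetric])
  qed
  show "wt \<tau> \<le> gdeg (Ev E v) (link_w T w) \<tau>"
    unfolding link_deg[OF tE vt] wE_def
    using cb wpos by (intro sum_mono) (simp add: less_imp_le)
  have "gdeg (Ev E v) (link_w T w) \<tau> \<le> (\<Sum>\<sigma>\<in>{\<sigma>\<in>T. \<tau> \<in> \<sigma>}. w \<sigma> * (real s - 1))"
    unfolding link_deg[OF tE vt]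
    using cb wpos by (intro sum_mono) (simp add: less_imp_le)
  also have "\<dots> = (real s - 1) * wt \<tau>" unfolding wE_def by (simp add: sum_distrib_left mult.commute)
  finally show "gdeg (Ev E v) (link_w T w) \<tau> \<le> (real s - 1) * wt \<tau>" .
qed

end

context TLS begin

lemma Ev_fin: "finite (Ev E v)" unfolding Ev_def using finE by simp

lemma swapV:
  assumes "A \<subseteq> E"
  shows "(\<Sum>v\<in>V. \<Sum>\<tau>\<in>A \<inter> Ev E v. g v \<tau>) = (\<Sum>\<tau>\<in>A. \<Sum>v\<in>\<tau>. g v \<tau>)"
proof -
  have finA: "finite A" using assms finE finite_subset by blast
  have "(\<Sum>v\<in>V. \<Sum>\<tau>\<in>A \<inter> Ev E v. g v \<tau>) = (\<Sum>v\<in>V. \<Sum>\<tau>\<in>{\<tau>\<in>A. v \<in> \<tau>}. g v \<tau>)"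
  proof (rule sum.cong)
    fix v assume "v \<in> V"
    have "A \<inter> Ev E v = {\<tau>\<in>A. v \<in> \<tau>}" using assms unfolding Ev_def by blast
    thus "(\<Sum>\<tau>\<in>A \<inter> Ev E v. g v \<tau>) = (\<Sum>\<tau>\<in>{\<tau>\<in>A. v \<in> \<tau>}. g v \<tau>)" by simp
  qed simp
  also have "\<dots> = (\<Sum>\<tau>\<in>A. \<Sum>v\<in>{v\<in>V. v \<in> \<tau>}. g v \<tau>)"
    by (rule sum.swap_restrict[OF finV finA])
  also have "\<dots> = (\<Sum>\<tau>\<in>A. \<Sum>v\<in>\<tau>. g v \<tau>)"
  proof (rule sum.cong)
    fix \<tau> assume "\<tau> \<in> A"
    hence "{v\<in>V. v \<in> \<tau>} = \<tau>" using assms tauV by blast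
    thus "(\<Sum>v\<in>{v\<in>V. v \<in> \<tau>}. g v \<tau>) = (\<Sum>v\<in>\<tau>. g v \<tau>)" by simp
  qed simp
  finally show ?thesis .
qed

lemma sum_wSet_V:
  assumes "A \<subseteq> E"
  shows "(\<Sum>v\<in>V. wSet T w (A \<inter> Ev E v)) = real k * wSet T w A"
proof -
  have "(\<Sum>v\<in>V. wSet T w (A \<inter> Ev E v)) = (\<Sum>\<tau>\<in>A. \<Sum>v\<in>\<tau>. wt \<tau>)"
    unfolding wSet_def by (rule swapV[OF assms])
  also have "\<dots> = (\<Sum>\<tau>\<in>A. real k * wt \<tau>)"
  proof (rule sum.cong)
    fix \<tau> assume "\<tau> \<in> A"
    hence "card \<tau> = k" using assms cardE by blast
    thus "(\<Sum>v\<in>\<tau>. wt \<tau>) = real k * wt \<tau>" by simp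
  qed simp
  also have "\<dots> = real k * wSet T w A" unfolding wSet_def by (simp add: sum_distrib_left)
  finally show ?thesis .
qed

lemma nint_deg:
  assumes tE: "\<tau> \<in> E" and ne: "\<tau> \<noteq> {}"
  shows "gdeg E (nint_w T w) \<tau> = (\<Sum>\<sigma>\<in>{\<sigma>\<in>T. \<tau> \<in> \<sigma>}. w \<sigma> * real (Qnint \<tau> \<sigma>))"
proof -
  have "gdeg E (nint_w T w) \<tau> =
        (\<Sum>\<tau>2\<in>E. \<Sum>\<sigma>\<in>T. if (\<tau> \<noteq> \<tau>2 \<and> \<tau> \<inter> \<tau>2 = {}) \<and> \<tau> \<in> \<sigma> \<and> \<tau>2 \<in> \<sigma> then w \<sigma> else 0)"
    unfolding gdeg_def nint_w_def
    by (rule sum.cong) (simp_all add: sum.inter_filter[OF finT])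
  also have "\<dots> = (\<Sum>\<sigma>\<in>T. \<Sum>\<tau>2\<in>E. if (\<tau> \<noteq> \<tau>2 \<and> \<tau> \<inter> \<tau>2 = {}) \<and> \<tau> \<in> \<sigma> \<and> \<tau>2 \<in> \<sigma> then w \<sigma> else 0)"
    by (rule sum.swap)
  also have "\<dots> = (\<Sum>\<sigma>\<in>T. if \<tau> \<in> \<sigma> then w \<sigma> * real (Qnint \<tau> \<sigma>) else 0)"
  proof (rule sum.cong)
    fix \<sigma> assume sT: "\<sigma> \<in> T"
    show "(\<Sum>\<tau>2\<in>E. if (\<tau> \<noteq> \<tau>2 \<and> \<tau> \<inter> \<tau>2 = {}) \<and> \<tau> \<in> \<sigma> \<and> \<tau>2 \<in> \<sigma> then w \<sigma> else 0) =
          (if \<tau> \<in> \<sigma> then w \<sigma> * real (Qnint \<tau> \<sigma>) else 0)"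
    proof (cases "\<tau> \<in> \<sigma>")
      case True
      have eq: "{\<tau>2 \<in> E. (\<tau> \<noteq> \<tau>2 \<and> \<tau> \<inter> \<tau>2 = {}) \<and> \<tau>2 \<in> \<sigma>} = {\<tau>'\<in>\<sigma>. \<tau> \<inter> \<tau>' = {}}"
        using sigE[OF sT] ne by blast
      have "(\<Sum>\<tau>2\<in>E. if (\<tau> \<noteq> \<tau>2 \<and> \<tau> \<inter> \<tau>2 = {}) \<and> \<tau> \<in> \<sigma> \<and> \<tau>2 \<in> \<sigma> then w \<sigma> else 0) =
            (\<Sum>\<tau>2\<in>{\<tau>2 \<in> E. (\<tau> \<noteq> \<tau>2 \<and> \<tau> \<inter> \<tau>2 = {}) \<and> \<tau>2 \<in> \<sigma>}. w \<sigma>)"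
        using True sum.inter_filter[OF finE, of "\<lambda>_. w \<sigma>" "\<lambda>\<tau>2. (\<tau> \<noteq> \<tau>2 \<and> \<tau> \<inter> \<tau>2 = {}) \<and> \<tau>2 \<in> \<sigma>"]
        by simp
      also have "\<dots> = w \<sigma> * real (Qnint \<tau> \<sigma>)" unfolding eq Qnint_def by simp
      finally show ?thesis using True by simp
    qed simp
  qed simp
  also have "\<dots> = (\<Sum>\<sigma>\<in>{\<sigma>\<in>T. \<tau> \<in> \<sigma>}. w \<sigma> * real (Qnint \<tau> \<sigma>))"
    by (simp add: sum.inter_filter[OF finT])
  finally show ?thesis .
qed

lemma nint_deg_bounds:
  assumes tE: "\<tau> \<in> E" and ne: "\<tau> \<noteq> {}"
    and lo: "\<And>\<sigma>. \<sigma> \<in> T \<Longrightarrow> \<tau> \<in> \<sigma> \<Longrightarrow> a \<le> real (Qnint \<tau> \<sigma>)"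
    and hi: "\<And>\<sigma>. \<sigma> \<in> T \<Longrightarrow> \<tau> \<in> \<sigma> \<Longrightarrow> real (Qnint \<tau> \<sigma>) \<le> b"
  shows "a * wt \<tau> \<le> gdeg E (nint_w T w) \<tau>" and "gdeg E (nint_w T w) \<tau> \<le> b * wt \<tau>"
proof -
  have "a * wt \<tau> = (\<Sum>\<sigma>\<in>{\<sigma>\<in>T. \<tau> \<in> \<sigma>}. w \<sigma> * a)" unfolding wE_def by (simp add: sum_distrib_left mult.commute)
  also have "\<dots> \<le> (\<Sum>\<sigma>\<in>{\<sigma>\<in>T. \<tau> \<in> \<sigma>}. w \<sigma> * real (Qnint \<tau> \<sigma>))"
    using lo wpos by (intro sum_mono mult_left_mono) (simp_all add: less_imp_le)
  finally show "a * wt \<tau> \<le> gdeg E (nint_w T w) \<tau>" unfolding nint_deg[OF tE ne] .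
  have "(\<Sum>\<sigma>\<in>{\<sigma>\<in>T. \<tau> \<in> \<sigma>}. w \<sigma> * real (Qnint \<tau> \<sigma>)) \<le> (\<Sum>\<sigma>\<in>{\<sigma>\<in>T. \<tau> \<in> \<sigma>}. w \<sigma> * b)"
    using hi wpos by (intro sum_mono mult_left_mono) (simp_all add: less_imp_le)
  also have "\<dots> = b * wt \<tau>" unfolding wE_def by (simp add: sum_distrib_left mult.commute)
  finally show "gdeg E (nint_w T w) \<tau> \<le> b * wt \<tau>" unfolding nint_deg[OF tE ne] .
qed

lemma ground_deg:
  assumes uV: "u \<in> V"
  shows "gdeg V (ground_w E T w) u = (real k - 1) * wSet T w (Ev E u)"
proof -
  have "gdeg V (ground_w E T w) u =
        (\<Sum>v\<in>V. \<Sum>\<tau>\<in>E. if u \<noteq> v \<and> u \<in> \<tau> \<and> v \<in> \<tau> then wt \<tau> else 0)"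
    unfolding gdeg_def ground_w_def
    by (rule sum.cong) (simp_all add: sum.inter_filter[OF finE])
  also have "\<dots> = (\<Sum>\<tau>\<in>E. \<Sum>v\<in>V. if u \<noteq> v \<and> u \<in> \<tau> \<and> v \<in> \<tau> then wt \<tau> else 0)"
    by (rule sum.swap)
  also have "\<dots> = (\<Sum>\<tau>\<in>E. if u \<in> \<tau> then (real k - 1) * wt \<tau> else 0)"
  proof (rule sum.cong)
    fix \<tau> assume tE: "\<tau> \<in> E"
    show "(\<Sum>v\<in>V. if u \<noteq> v \<and> u \<in> \<tau> \<and> v \<in> \<tau> then wt \<tau> else 0) =
          (if u \<in> \<tau> then (real k - 1) * wt \<tau> else 0)"
    proof (cases "u \<in> \<tau>")
      case True
      have eq: "{v\<in>V. u \<noteq> v \<and> v \<in> \<tau>} = \<tau> - {u}" using tauV[OF tE] by blast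
      have ck: "card (\<tau> - {u}) = k - 1" using True cardE[OF tE] fintau[OF tE] by simp
      have k1: "1 \<le> k" using True cardE[OF tE] fintau[OF tE] card_gt_0_iff
        by (metis One_nat_def Suc_leI empty_iff)
      have "(\<Sum>v\<in>V. if u \<noteq> v \<and> u \<in> \<tau> \<and> v \<in> \<tau> then wt \<tau> else 0) = (\<Sum>v\<in>{v\<in>V. u \<noteq> v \<and> v \<in> \<tau>}. wt \<tau>)"
        using True sum.inter_filter[OF finV, of "\<lambda>_. wt \<tau>" "\<lambda>v. u \<noteq> v \<and> v \<in> \<tau>"] by simp
      also have "\<dots> = real (k - 1) * wt \<tau>" unfolding eq using ck by simp
      finally show ?thesis using True k1 by (simp add: of_nat_diff)
    qed simp
  qed simp
  also have "\<dots> = (\<Sum>\<tau>\<in>E. (real k - 1) * (if u \<in> \<tau> then wt \<tau> else 0))"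
    by (rule sum.cong) simp_all
  also have "\<dots> = (real k - 1) * wSet T w (Ev E u)"
    unfolding wSet_def Ev_def sum_distrib_left[symmetric]
    by (simp add: sum.inter_filter[OF finE])
  finally show ?thesis .
qed

lemma ground_int:
  assumes SV: "S \<subseteq> V"
  shows "(\<Sum>u\<in>S. \<Sum>v\<in>S. ground_w E T w u v) = (\<Sum>\<tau>\<in>E. wt \<tau> * (real (card (\<tau> \<inter> S)) * (real (card (\<tau> \<inter> S)) - 1)))"
proof -
  have finS: "finite S" using SV finV finite_subset by blast
  have "(\<Sum>u\<in>S. \<Sum>v\<in>S. ground_w E T w u v) =
        (\<Sum>u\<in>S. \<Sum>v\<in>S. \<Sum>\<tau>\<in>E. if u \<noteq> v \<and> u \<in> \<tau> \<and> v \<in> \<tau> then wt \<tau> else 0)"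
    unfolding ground_w_def
    by (intro sum.cong refl) (simp_all add: sum.inter_filter[OF finE])
  also have "\<dots> = (\<Sum>u\<in>S. \<Sum>\<tau>\<in>E. \<Sum>v\<in>S. if u \<noteq> v \<and> u \<in> \<tau> \<and> v \<in> \<tau> then wt \<tau> else 0)"
    by (intro sum.cong refl sum.swap)
  also have "\<dots> = (\<Sum>\<tau>\<in>E. \<Sum>u\<in>S. \<Sum>v\<in>S. if u \<noteq> v \<and> u \<in> \<tau> \<and> v \<in> \<tau> then wt \<tau> else 0)"
    by (rule sum.swap)
  also have "\<dots> = (\<Sum>\<tau>\<in>E. wt \<tau> * (real (card (\<tau> \<inter> S)) * (real (card (\<tau> \<inter> S)) - 1)))"
  proof (rule sum.cong)
    fix \<tau> assume tE: "\<tau> \<in> E"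
    have finTS: "finite (\<tau> \<inter> S)" using finS by simp
    have inner: "(\<Sum>v\<in>S. if u \<noteq> v \<and> u \<in> \<tau> \<and> v \<in> \<tau> then wt \<tau> else 0) =
                 (if u \<in> \<tau> \<inter> S then wt \<tau> * (real (card (\<tau> \<inter> S)) - 1) else 0)" if uS: "u \<in> S" for u
    proof (cases "u \<in> \<tau>")
      case True
      have eq: "{v\<in>S. u \<noteq> v \<and> v \<in> \<tau>} = (\<tau> \<inter> S) - {u}" by blast
      have ut: "u \<in> \<tau> \<inter> S" using True uS by blast
      have c: "card ((\<tau> \<inter> S) - {u}) = card (\<tau> \<inter> S) - 1" using finTS ut by simp
      have c1: "0 < card (\<tau> \<inter> S)" using finTS ut card_gt_0_iff by blast
      have "(\<Sum>v\<in>S. if u \<noteq> v \<and> u \<in> \<tau> \<and> v \<in> \<tau> then wt \<tau> else 0) = (\<Sum>v\<in>{v\<in>S. u \<noteq> v \<and> v \<in> \<tau>}. wt \<tau>)"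
        using True sum.inter_filter[OF finS, of "\<lambda>_. wt \<tau>" "\<lambda>v. u \<noteq> v \<and> v \<in> \<tau>"] by simp
      also have "\<dots> = real (card (\<tau> \<inter> S) - 1) * wt \<tau>" unfolding eq using c by simp
      finally show ?thesis using ut c1 by (simp add: of_nat_diff mult.commute)
    qed simp
    have "(\<Sum>u\<in>S. \<Sum>v\<in>S. if u \<noteq> v \<and> u \<in> \<tau> \<and> v \<in> \<tau> then wt \<tau> else 0) =
          (\<Sum>u\<in>S. if u \<in> \<tau> \<inter> S then wt \<tau> * (real (card (\<tau> \<inter> S)) - 1) else 0)"
      using inner by (rule sum.cong[OF refl])
    also have "\<dots> = (\<Sum>u\<in>\<tau> \<inter> S. wt \<tau> * (real (card (\<tau> \<inter> S)) - 1))"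
      using sum.inter_filter[OF finS, of "\<lambda>_. wt \<tau> * (real (card (\<tau> \<inter> S)) - 1)" "\<lambda>u. u \<in> \<tau> \<inter> S"]
      by (simp add: Int_commute Collect_conj_eq inf_set_def[symmetric])
    also have "\<dots> = wt \<tau> * (real (card (\<tau> \<inter> S)) * (real (card (\<tau> \<inter> S)) - 1))" by simp
    finally show "(\<Sum>u\<in>S. \<Sum>v\<in>S. if u \<noteq> v \<and> u \<in> \<tau> \<and> v \<in> \<tau> then wt \<tau> else 0) =
          wt \<tau> * (real (card (\<tau> \<inter> S)) * (real (card (\<tau> \<inter> S)) - 1))" .
  qed simp
  finally show ?thesis .
qed

end

context TLS begin

lemma witness_face:
  assumes AE: "A \<subseteq> E" and tA: "\<tau> \<in> A" and noU: "\<forall>\<sigma>\<in>T. card (A \<inter> \<sigma>) \<noteq> 1"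
  shows "wt \<tau> \<le> (\<Sum>\<tau>'\<in>A. nint_w T w \<tau> \<tau>') + (\<Sum>v\<in>\<tau>. \<Sum>\<tau>'\<in>A \<inter> Ev E v. link_w T w \<tau> \<tau>')"
proof -
  have finA: "finite A" using AE finE finite_subset by blast
  have tE: "\<tau> \<in> E" using AE tA by blast
  have fint: "finite \<tau>" using fintau[OF tE] .
  define P where "P \<tau>' = (\<Sum>\<sigma>\<in>{\<sigma>\<in>T. \<tau> \<in> \<sigma> \<and> \<tau>' \<in> \<sigma>}. w \<sigma>)" for \<tau>'
  define c where "c \<tau>' = (if \<tau> \<noteq> \<tau>' \<and> \<tau> \<inter> \<tau>' = {} then 1 else 0)
                       + (if \<tau> \<noteq> \<tau>' then real (card (\<tau> \<inter> \<tau>')) else 0)" for \<tau>'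
  have c_nn: "0 \<le> c \<tau>'" for \<tau>' unfolding c_def by simp
  have n1: "nint_w T w \<tau> \<tau>' = (if \<tau> \<noteq> \<tau>' \<and> \<tau> \<inter> \<tau>' = {} then 1 else 0) * P \<tau>'" for \<tau>'
    unfolding nint_w_def P_def by simp
  have l1: "link_w T w \<tau> \<tau>' = (if \<tau> \<noteq> \<tau>' then 1 else 0) * P \<tau>'" for \<tau>'
    unfolding link_w_def P_def by simp
  have "(\<Sum>v\<in>\<tau>. \<Sum>\<tau>'\<in>A \<inter> Ev E v. link_w T w \<tau> \<tau>') = (\<Sum>v\<in>\<tau>. \<Sum>\<tau>'\<in>{\<tau>'\<in>A. v \<in> \<tau>'}. link_w T w \<tau> \<tau>')"
  proof (rule sum.cong[OF refl])
    fix v assume "v \<in> \<tau>"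
    have "A \<inter> Ev E v = {\<tau>'\<in>A. v \<in> \<tau>'}" using AE unfolding Ev_def by blast
    thus "(\<Sum>\<tau>'\<in>A \<inter> Ev E v. link_w T w \<tau> \<tau>') = (\<Sum>\<tau>'\<in>{\<tau>'\<in>A. v \<in> \<tau>'}. link_w T w \<tau> \<tau>')" by simp
  qed
  also have "\<dots> = (\<Sum>\<tau>'\<in>A. \<Sum>v\<in>{v\<in>\<tau>. v \<in> \<tau>'}. link_w T w \<tau> \<tau>')"
    by (rule sum.swap_restrict[OF fint finA])
  also have "\<dots> = (\<Sum>\<tau>'\<in>A. real (card (\<tau> \<inter> \<tau>')) * link_w T w \<tau> \<tau>')"
  proof (rule sum.cong[OF refl])
    fix \<tau>' assume "\<tau>' \<in> A"
    have "{v\<in>\<tau>. v \<in> \<tau>'} = \<tau> \<inter> \<tau>'" by blast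
    thus "(\<Sum>v\<in>{v\<in>\<tau>. v \<in> \<tau>'}. link_w T w \<tau> \<tau>') = real (card (\<tau> \<inter> \<tau>')) * link_w T w \<tau> \<tau>'" by simp
  qed
  finally have r2: "(\<Sum>v\<in>\<tau>. \<Sum>\<tau>'\<in>A \<inter> Ev E v. link_w T w \<tau> \<tau>') = (\<Sum>\<tau>'\<in>A. real (card (\<tau> \<inter> \<tau>')) * link_w T w \<tau> \<tau>')" .
  have "(\<Sum>\<tau>'\<in>A. nint_w T w \<tau> \<tau>') + (\<Sum>\<tau>'\<in>A. real (card (\<tau> \<inter> \<tau>')) * link_w T w \<tau> \<tau>')
        = (\<Sum>\<tau>'\<in>A. c \<tau>' * P \<tau>')"
    unfolding sum.distrib[symmetric] n1 l1 c_def by (rule sum.cong[OF refl]) (simp add: algebra_simps)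
  also have "\<dots> = (\<Sum>\<tau>'\<in>A. \<Sum>\<sigma>\<in>T. if \<tau> \<in> \<sigma> \<and> \<tau>' \<in> \<sigma> then c \<tau>' * w \<sigma> else 0)"
    unfolding P_def sum_distrib_left
    by (rule sum.cong[OF refl]) (simp add: sum.inter_filter[OF finT])
  also have "\<dots> = (\<Sum>\<sigma>\<in>T. \<Sum>\<tau>'\<in>A. if \<tau> \<in> \<sigma> \<and> \<tau>' \<in> \<sigma> then c \<tau>' * w \<sigma> else 0)"
    by (rule sum.swap)
  also have "\<dots> \<ge> (\<Sum>\<sigma>\<in>T. if \<tau> \<in> \<sigma> then w \<sigma> else 0)"
  proof (rule sum_mono)
    fix \<sigma> assume sT: "\<sigma> \<in> T"
    show "(if \<tau> \<in> \<sigma> then w \<sigma> else 0) \<le> (\<Sum>\<tau>'\<in>A. if \<tau> \<in> \<sigma> \<and> \<tau>' \<in> \<sigma> then c \<tau>' * w \<sigma> else 0)"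
    proof (cases "\<tau> \<in> \<sigma>")
      case True
      have cne: "card (A \<inter> \<sigma>) \<noteq> 1" using noU sT by blast
      have tin: "\<tau> \<in> A \<inter> \<sigma>" using True tA by blast
      have "A \<inter> \<sigma> \<noteq> {\<tau>}" using cne by auto
      then obtain \<tau>' where t': "\<tau>' \<in> A \<inter> \<sigma>" "\<tau>' \<noteq> \<tau>" using tin by blast
      have c1: "1 \<le> c \<tau>'"
      proof (cases "\<tau> \<inter> \<tau>' = {}")
        case True thus ?thesis using t' unfolding c_def by simp
      next
        case False
        hence "card (\<tau> \<inter> \<tau>') \<noteq> 0" using fint by simp
        hence "1 \<le> real (card (\<tau> \<inter> \<tau>'))" by linarith
        thus ?thesis using t' unfolding c_def by simp
      qed
      have "w \<sigma> \<le> c \<tau>' * w \<sigma>" using c1 wpos[OF sT] by (simp add: mult_le_cancel_right1)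
      also have "\<dots> = (if \<tau> \<in> \<sigma> \<and> \<tau>' \<in> \<sigma> then c \<tau>' * w \<sigma> else 0)" using True t' by simp
      also have "\<dots> \<le> (\<Sum>\<tau>'\<in>A. if \<tau> \<in> \<sigma> \<and> \<tau>' \<in> \<sigma> then c \<tau>' * w \<sigma> else 0)"
        using t' finA c_nn wpos[OF sT]
        by (intro member_le_sum) (simp_all add: less_imp_le)
      finally show ?thesis using True by simp
    next
      case False
      thus ?thesis by simp
    qed
  qed
  also have "(\<Sum>\<sigma>\<in>T. if \<tau> \<in> \<sigma> then w \<sigma> else 0) = wt \<tau>"
    unfolding wE_def by (simp add: sum.inter_filter[OF finT])
  finally show ?thesis using r2 by simp
qed

lemma witness:
  assumes AE: "A \<subseteq> E" and LV: "L \<subseteq> V" and noU: "\<forall>\<sigma>\<in>T. card (A \<inter> \<sigma>) \<noteq> 1"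
  shows "wSet T w {\<tau>\<in>A. \<tau> \<subseteq> L} \<le> (\<Sum>\<tau>\<in>A. \<Sum>\<tau>'\<in>A. nint_w T w \<tau> \<tau>')
           + (\<Sum>v\<in>L. \<Sum>\<tau>\<in>A \<inter> Ev E v. \<Sum>\<tau>'\<in>A \<inter> Ev E v. link_w T w \<tau> \<tau>')"
proof -
  have finA: "finite A" using AE finE finite_subset by blast
  let ?A' = "{\<tau>\<in>A. \<tau> \<subseteq> L}"
  define G where "G v \<tau> = (\<Sum>\<tau>'\<in>A \<inter> Ev E v. link_w T w \<tau> \<tau>')" for v \<tau>
  have Gnn: "0 \<le> G v \<tau>" for v \<tau> unfolding G_def link_w_def
    by (intro sum_nonneg) (auto intro!: sum_nonneg simp: wpos less_imp_le)
  have ifnn: "0 \<le> (if v \<in> L then G v \<tau> else 0)" for v \<tau> using Gnn by simp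
  have Nnn: "0 \<le> (\<Sum>\<tau>'\<in>A. nint_w T w \<tau> \<tau>')" for \<tau> unfolding nint_w_def
    by (intro sum_nonneg) (auto intro!: sum_nonneg simp: wpos less_imp_le)
  have "wSet T w ?A' \<le> (\<Sum>\<tau>\<in>?A'. (\<Sum>\<tau>'\<in>A. nint_w T w \<tau> \<tau>') + (\<Sum>v\<in>\<tau>. G v \<tau>))"
    unfolding wSet_def G_def using witness_face[OF AE _ noU] by (intro sum_mono) blast
  also have "\<dots> = (\<Sum>\<tau>\<in>?A'. \<Sum>\<tau>'\<in>A. nint_w T w \<tau> \<tau>') + (\<Sum>\<tau>\<in>?A'. \<Sum>v\<in>\<tau>. G v \<tau>)"
    by (rule sum.distrib)
  also have "(\<Sum>\<tau>\<in>?A'. \<Sum>\<tau>'\<in>A. nint_w T w \<tau> \<tau>') \<le> (\<Sum>\<tau>\<in>A. \<Sum>\<tau>'\<in>A. nint_w T w \<tau> \<tau>')"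
    using finA Nnn by (intro sum_mono2) auto
  also have "(\<Sum>\<tau>\<in>?A'. \<Sum>v\<in>\<tau>. G v \<tau>) \<le> (\<Sum>\<tau>\<in>A. \<Sum>v\<in>\<tau>. if v \<in> L then G v \<tau> else 0)"
  proof -
    have "(\<Sum>\<tau>\<in>?A'. \<Sum>v\<in>\<tau>. G v \<tau>) = (\<Sum>\<tau>\<in>?A'. \<Sum>v\<in>\<tau>. if v \<in> L then G v \<tau> else 0)"
      by (rule sum.cong[OF refl], rule sum.cong[OF refl]) auto
    also have "\<dots> \<le> (\<Sum>\<tau>\<in>A. \<Sum>v\<in>\<tau>. if v \<in> L then G v \<tau> else 0)"
      using finA by (intro sum_mono2) (simp_all add: sum_nonneg ifnn)
    finally show ?thesis .
  qed
  also have "(\<Sum>\<tau>\<in>A. \<Sum>v\<in>\<tau>. if v \<in> L then G v \<tau> else 0) = (\<Sum>v\<in>V. \<Sum>\<tau>\<in>A \<inter> Ev E v. if v \<in> L then G v \<tau> else 0)"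
    by (rule swapV[OF AE, symmetric])
  also have "\<dots> = (\<Sum>v\<in>V. if v \<in> L then (\<Sum>\<tau>\<in>A \<inter> Ev E v. G v \<tau>) else 0)"
    by (rule sum.cong[OF refl]) simp
  also have "\<dots> = (\<Sum>v\<in>L. \<Sum>\<tau>\<in>A \<inter> Ev E v. G v \<tau>)"
  proof -
    have e: "{x\<in>V. x \<in> L} = L" using LV by blast
    show ?thesis
      using sum.inter_filter[OF finV, of "\<lambda>v. \<Sum>\<tau>\<in>A \<inter> Ev E v. G v \<tau>" "\<lambda>v. v \<in> L", unfolded e]
      by simp
  qed
  finally show ?thesis unfolding G_def by simp
qed

end

lemma light_arith:
  fixes a M D W lam d s1 :: real
  assumes a0: "0 \<le> a" and aM: "a \<le> M" and Ms: "M \<le> s1 * a" and W0: "0 < W" and WD: "W \<le> D"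
    and small: "M / D < d" and lam: "0 \<le> lam"
  shows "M * (lam + M / D) \<le> lam * s1 * a + a * min (s1 * d) (s1\<^sup>2 * (a / W))"
proof -
  have D0: "0 < D" using W0 WD by linarith
  have M0: "0 \<le> M" using a0 aM by linarith
  have q0: "0 \<le> M / D" using M0 D0 by simp
  have h1: "M * (M / D) \<le> (s1 * d) * a"
  proof -
    have "M * (M / D) \<le> M * d" using small M0 by (intro mult_left_mono) simp_all
    also have "\<dots> \<le> s1 * a * d" using Ms small q0 by (intro mult_right_mono) simp_all
    finally show ?thesis by (simp add: algebra_simps)
  qed
  have h2: "M * (M / D) \<le> s1\<^sup>2 * (a / W) * a"
  proof -
    have "M * (M / D) = M * M / D" by simp
    also have "\<dots> \<le> M * M / W" using W0 WD M0 by (intro divide_left_mono) simp_all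
    also have "\<dots> \<le> (s1 * a) * (s1 * a) / W" using M0 Ms W0 by (intro divide_right_mono mult_mono) simp_all
    also have "\<dots> = s1\<^sup>2 * (a / W) * a" by (simp add: power2_eq_square)
    finally show ?thesis .
  qed
  have "M * (M / D) \<le> min (s1 * d) (s1\<^sup>2 * (a / W)) * a"
    using h1 h2 by (cases "s1 * d \<le> s1\<^sup>2 * (a / W)") (simp_all only: min_def if_True if_False)
  moreover have "lam * M \<le> lam * (s1 * a)" using lam Ms by (intro mult_left_mono)
  ultimately show ?thesis by (simp add: algebra_simps)
qed

lemma large_arith:
  fixes a M D W d s1 :: real
  assumes a0: "0 \<le> a" and Ms: "M \<le> s1 * a" and W0: "0 < W" and WD: "W \<le> D"
    and large: "d \<le> M / D" and s1: "0 \<le> s1"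
  shows "s1 * d \<le> s1\<^sup>2 * (a / W)"
proof -
  have D0: "0 < D" using W0 WD by linarith
  have "M / D \<le> s1 * a / W"
  proof -
    have "M / D \<le> s1 * a / D" using Ms D0 by (simp add: divide_right_mono)
    also have "\<dots> \<le> s1 * a / W" using W0 WD s1 a0 by (intro divide_left_mono) simp_all
    finally show ?thesis .
  qed
  hence "d \<le> s1 * (a / W)" using large by simp
  hence "s1 * d \<le> s1 * (s1 * (a / W))" using s1 by (rule mult_left_mono)
  thus ?thesis by (simp add: power2_eq_square)
qed

context TLS begin

lemma linkw_nn: "0 \<le> link_w T w x y"
  unfolding link_w_def by (auto intro!: sum_nonneg simp: wpos less_imp_le)

lemma nintw_nn: "0 \<le> nint_w T w x y"
  unfolding nint_w_def by (auto intro!: sum_nonneg simp: wpos less_imp_le)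

lemma groundw_nn: "0 \<le> ground_w E T w x y"
  unfolding ground_w_def by (auto intro!: sum_nonneg simp: wt_nonneg)

lemma M_bounds:
  assumes AE: "A \<subseteq> E"
  shows "wSet T w (A \<inter> Ev E v) \<le> link_vol E T w v (A \<inter> Ev E v)"
    and "link_vol E T w v (A \<inter> Ev E v) \<le> (real s - 1) * wSet T w (A \<inter> Ev E v)"
proof -
  have mem: "\<tau> \<in> E" "v \<in> \<tau>" if "\<tau> \<in> A \<inter> Ev E v" for \<tau> using that AE unfolding Ev_def by auto
  show "wSet T w (A \<inter> Ev E v) \<le> link_vol E T w v (A \<inter> Ev E v)"
    unfolding wSet_def link_vol_def gvol_def
    using link_deg_bounds(1)[OF mem] by (intro sum_mono) blast
  have "link_vol E T w v (A \<inter> Ev E v) \<le> (\<Sum>\<tau>\<in>A \<inter> Ev E v. (real s - 1) * wt \<tau>)"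
    unfolding link_vol_def gvol_def
    using link_deg_bounds(2)[OF mem] by (intro sum_mono) blast
  thus "link_vol E T w v (A \<inter> Ev E v) \<le> (real s - 1) * wSet T w (A \<inter> Ev E v)"
    unfolding wSet_def by (simp add: sum_distrib_left)
qed

lemma Wv_pos:
  assumes "v \<in> V" shows "0 < wSet T w (Ev E v)"
proof -
  obtain \<tau> where t: "\<tau> \<in> E" "v \<in> \<tau>" using assms tlsD(4) by blast
  have "wt \<tau> \<le> wSet T w (Ev E v)" unfolding wSet_def
    using t Ev_fin wt_nonneg by (intro member_le_sum) (simp_all add: Ev_def)
  thus ?thesis using wt_pos[OF t(1)] by simp
qed

lemma D_ge: "wSet T w (Ev E v) \<le> link_vol E T w v (Ev E v)"
  using M_bounds(1)[of E v] by (simp add: Ev_def Int_absorb1)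

lemma link_int:
  assumes AE: "A \<subseteq> E" and ex: "expander (Ev E v) (link_w T w) lam" and lam: "0 \<le> lam" "lam < 1"
  shows "(\<Sum>\<tau>\<in>A \<inter> Ev E v. \<Sum>\<tau>'\<in>A \<inter> Ev E v. link_w T w \<tau> \<tau>')
         \<le> link_vol E T w v (A \<inter> Ev E v) * (lam + link_vol E T w v (A \<inter> Ev E v) / link_vol E T w v (Ev E v))"
  unfolding link_vol_def
  by (rule expander_int[OF Ev_fin _ ex lam]) (simp_all add: linkw_nn)

end

lemma sum_Suc_1: "sum f {1..Suc J} = sum f {1..J} + (f (Suc J) :: real)"
  by (simp add: sum.cl_ivl_Suc)

lemma lev_value:
  fixes x b :: real
  assumes x0: "0 \<le> x" and xb: "x \<le> b"
  shows "x \<le> b / 2 ^ J + (\<Sum>i\<in>{1..J}. (b / 2 ^ i) * (if b / 2 ^ i \<le> x then 1 else 0))"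
proof (induction J)
  case 0
  then show ?case using xb by simp
next
  case (Suc J)
  define f where "f i = (b / 2 ^ i) * (if b / 2 ^ i \<le> x then 1 else (0::real))" for i :: nat
  have b0: "0 \<le> b" using x0 xb by linarith
  have IH: "x \<le> b / 2 ^ J + sum f {1..J}" using Suc.IH unfolding f_def .
  have S: "sum f {1..Suc J} = sum f {1..J} + f (Suc J)" by (rule sum_Suc_1)
  have nn: "0 \<le> sum f {1..J}" unfolding f_def using b0 by (intro sum_nonneg) simp
  have h: "b / 2 ^ J = 2 * (b / 2 ^ Suc J)" by simp
  have "x \<le> b / 2 ^ Suc J + sum f {1..Suc J}"
  proof (cases "b / 2 ^ Suc J \<le> x")
    case True
    hence "f (Suc J) = b / 2 ^ Suc J" unfolding f_def by simp
    thus ?thesis using IH S h by linarith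
  next
    case False
    hence "f (Suc J) = 0" unfolding f_def by simp
    thus ?thesis using S nn False by linarith
  qed
  thus ?case unfolding f_def .
qed

lemma face_level:
  fixes y :: "'a \<Rightarrow> real" and \<tau> L :: "'a set" and b :: real
  assumes fin: "finite \<tau>" and ne: "\<tau> \<noteq> {}" and y0: "\<And>v. v \<in> \<tau> \<Longrightarrow> 0 \<le> y v" and yb: "\<And>v. v \<in> \<tau> \<Longrightarrow> y v \<le> b"
    and yH: "\<And>v. v \<in> \<tau> \<Longrightarrow> v \<notin> L \<Longrightarrow> y v = b"
  shows "(\<Sum>v\<in>\<tau> \<inter> L. y v) \<le> b * (if \<tau> \<subseteq> L then 1 else 0) + real (card \<tau> - 1) * (b / 2 ^ J)
          + (\<Sum>i\<in>{1..J}. (b / 2 ^ i) * real (card {v\<in>\<tau>. b / 2 ^ i \<le> y v} - 1))"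
proof -
  have ex: "\<exists>v0\<in>\<tau>. (\<forall>v\<in>\<tau>. y v \<le> y v0) \<and> (\<tau> \<subseteq> L \<or> v0 \<notin> L)"
  proof (cases "\<tau> \<subseteq> L")
    case True
    have "Max (y ` \<tau>) \<in> y ` \<tau>" using fin ne by (intro Max_in) simp_all
    then obtain v0 where v0': "Max (y ` \<tau>) = y v0" "v0 \<in> \<tau>" by (rule imageE)
    have mx: "\<forall>v\<in>\<tau>. y v \<le> y v0" unfolding v0'(1)[symmetric] using fin by simp
    show ?thesis using mx v0'(2) True by blast
  next
    case False
    then obtain v0 where v0: "v0 \<in> \<tau>" "v0 \<notin> L" by blast
    have mx: "\<forall>v\<in>\<tau>. y v \<le> y v0" using yb yH[OF v0] by simp
    show ?thesis using mx v0 by blast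
  qed
  then obtain v0 where v0: "v0 \<in> \<tau>" and vmax': "\<forall>v\<in>\<tau>. y v \<le> y v0" and vL': "\<tau> \<subseteq> L \<or> v0 \<notin> L"
    by blast
  have vmax: "y v \<le> y v0" if "v \<in> \<tau>" for v using vmax' that by blast
  have vL: "v0 \<notin> L" if "\<not> \<tau> \<subseteq> L" using vL' that by blast
  have b0: "0 \<le> b" using y0[OF v0] yb[OF v0] by linarith
  have step1: "(\<Sum>v\<in>\<tau> \<inter> L. y v) \<le> b * (if \<tau> \<subseteq> L then 1 else 0) + (\<Sum>v\<in>\<tau> - {v0}. y v)"
  proof (cases "\<tau> \<subseteq> L")
    case True
    have "(\<Sum>v\<in>\<tau> \<inter> L. y v) = (\<Sum>v\<in>\<tau>. y v)" using True by (simp add: Int_absorb2)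
    also have "\<dots> = y v0 + (\<Sum>v\<in>\<tau> - {v0}. y v)" using fin v0 by (simp add: sum.remove)
    finally show ?thesis using True yb[OF v0] by simp
  next
    case False
    have "\<tau> \<inter> L \<subseteq> \<tau> - {v0}" using vL[OF False] by blast
    hence "(\<Sum>v\<in>\<tau> \<inter> L. y v) \<le> (\<Sum>v\<in>\<tau> - {v0}. y v)"
      using fin y0 by (intro sum_mono2) auto
    thus ?thesis using False by simp
  qed
  have step2: "(\<Sum>v\<in>\<tau> - {v0}. y v) \<le> (\<Sum>v\<in>\<tau> - {v0}. b / 2 ^ J + (\<Sum>i\<in>{1..J}. (b / 2 ^ i) * (if b / 2 ^ i \<le> y v then 1 else 0)))"
    using y0 yb by (intro sum_mono lev_value) auto
  also have "\<dots> = real (card \<tau> - 1) * (b / 2 ^ J) + (\<Sum>i\<in>{1..J}. (b / 2 ^ i) * real (card {v\<in>\<tau> - {v0}. b / 2 ^ i \<le> y v}))"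
  proof -
    have "(\<Sum>v\<in>\<tau> - {v0}. \<Sum>i\<in>{1..J}. (b / 2 ^ i) * (if b / 2 ^ i \<le> y v then 1 else 0))
        = (\<Sum>i\<in>{1..J}. \<Sum>v\<in>\<tau> - {v0}. (b / 2 ^ i) * (if b / 2 ^ i \<le> y v then 1 else 0))"
      by (rule sum.swap)
    also have "\<dots> = (\<Sum>i\<in>{1..J}. (b / 2 ^ i) * real (card {v\<in>\<tau> - {v0}. b / 2 ^ i \<le> y v}))"
    proof (rule sum.cong[OF refl])
      fix i
      have "(\<Sum>v\<in>\<tau> - {v0}. (b / 2 ^ i) * (if b / 2 ^ i \<le> y v then 1 else 0))
            = (b / 2 ^ i) * (\<Sum>v\<in>\<tau> - {v0}. (if b / 2 ^ i \<le> y v then 1 else 0))"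
        by (simp add: sum_distrib_left)
      also have "(\<Sum>v\<in>\<tau> - {v0}. (if b / 2 ^ i \<le> y v then 1 else 0 :: real)) = real (card {v\<in>\<tau> - {v0}. b / 2 ^ i \<le> y v})"
        using fin sum.inter_filter[of "\<tau> - {v0}" "\<lambda>_. 1::real" "\<lambda>v. b / 2 ^ i \<le> y v"] by simp
      finally show "(\<Sum>v\<in>\<tau> - {v0}. (b / 2 ^ i) * (if b / 2 ^ i \<le> y v then 1 else 0))
            = (b / 2 ^ i) * real (card {v\<in>\<tau> - {v0}. b / 2 ^ i \<le> y v})" .
    qed
    finally show ?thesis using fin v0 by (simp add: sum.distrib card_Diff_singleton)
  qed
  also have "\<dots> \<le> real (card \<tau> - 1) * (b / 2 ^ J) + (\<Sum>i\<in>{1..J}. (b / 2 ^ i) * real (card {v\<in>\<tau>. b / 2 ^ i \<le> y v} - 1))"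
  proof -
    have "card {v\<in>\<tau> - {v0}. th \<le> y v} \<le> card {v\<in>\<tau>. th \<le> y v} - 1" for th
    proof (cases "th \<le> y v0")
      case True
      have "{v\<in>\<tau> - {v0}. th \<le> y v} = {v\<in>\<tau>. th \<le> y v} - {v0}" by blast
      moreover have "v0 \<in> {v\<in>\<tau>. th \<le> y v}" using True v0 by simp
      ultimately show ?thesis using fin by simp
    next
      case False
      have e: "{v\<in>\<tau> - {v0}. th \<le> y v} = {}" using False vmax by force
      show ?thesis unfolding e by simp
    qed
    thus ?thesis using b0 by (intro add_left_mono sum_mono mult_left_mono) simp_all
  qed
  finally show ?thesis using step1 by linarith
qed

lemma wCS:
  fixes p x :: "'a \<Rightarrow> real"
  assumes fin: "finite I" and p0: "\<And>i. i \<in> I \<Longrightarrow> 0 \<le> p i"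
  shows "(\<Sum>i\<in>I. p i * x i)\<^sup>2 \<le> (\<Sum>i\<in>I. p i) * (\<Sum>i\<in>I. p i * (x i)\<^sup>2)"
proof -
  define A0 where "A0 = (\<Sum>i\<in>I. p i)"
  define B where "B = (\<Sum>i\<in>I. p i * x i)"
  define C where "C = (\<Sum>i\<in>I. p i * (x i)\<^sup>2)"
  have A0nn: "0 \<le> A0" unfolding A0_def using p0 by (simp add: sum_nonneg)
  show ?thesis
  proof (cases "A0 = 0")
    case True
    hence "\<forall>i\<in>I. p i = 0" using fin p0 unfolding A0_def by (simp add: sum_nonneg_eq_0_iff)
    hence "B = 0" unfolding B_def by simp
    thus ?thesis using True unfolding A0_def B_def C_def by simp
  next
    case False
    hence A0p: "0 < A0" using A0nn by simp
    define r where "r = B / A0"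
    have "0 \<le> (\<Sum>i\<in>I. p i * (x i - r)\<^sup>2)" using p0 by (intro sum_nonneg) simp
    also have "(\<Sum>i\<in>I. p i * (x i - r)\<^sup>2) = (\<Sum>i\<in>I. p i * (x i)\<^sup>2 - 2 * r * (p i * x i) + r\<^sup>2 * p i)"
      by (rule sum.cong[OF refl]) (simp add: power2_eq_square algebra_simps)
    also have "\<dots> = C - 2 * r * B + r\<^sup>2 * A0"
      unfolding A0_def B_def C_def by (simp add: sum.distrib sum_subtractf sum_distrib_left)
    also have "\<dots> = C - B\<^sup>2 / A0" unfolding r_def using A0p by (simp add: power2_eq_square field_simps)
    finally have "B\<^sup>2 / A0 \<le> C" by simp
    hence "B\<^sup>2 \<le> C * A0" using A0p by (simp add: pos_divide_le_eq)
    thus ?thesis unfolding A0_def B_def C_def by (simp add: mult.commute)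
  qed
qed

lemma vol_ratio:
  fixes kap Y W :: real
  assumes k0: "0 \<le> kap" and Y0: "0 \<le> Y" and W0: "0 < W"
  shows "(kap * Y)\<^sup>2 / (kap * ((kap + 1) * W)) \<le> Y\<^sup>2 / W"
proof (cases "kap = 0")
  case True thus ?thesis using assms by simp
next
  case False
  hence kp: "0 < kap" using assms by simp
  have d: "0 < kap * ((kap + 1) * W)" using kp W0 by simp
  have e: "Y\<^sup>2 / W * (kap * ((kap + 1) * W)) = Y\<^sup>2 * (kap * (kap + 1))" using W0 by simp
  have h: "0 \<le> Y\<^sup>2 * kap" using kp by simp
  have "(kap * Y)\<^sup>2 \<le> Y\<^sup>2 * (kap * (kap + 1))"
    using h by (simp add: power2_eq_square algebra_simps)
  thus ?thesis using d e by (simp add: divide_le_eq)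
qed

context TLS begin

lemma sum_a_S:
  assumes AE: "A \<subseteq> E" and SV: "S \<subseteq> V"
  shows "(\<Sum>u\<in>S. wSet T w (A \<inter> Ev E u)) = (\<Sum>\<tau>\<in>A. wt \<tau> * real (card (\<tau> \<inter> S)))"
proof -
  have finS: "finite S" using SV finV finite_subset by blast
  have e: "{x\<in>V. x \<in> S} = S" using SV by blast
  have "(\<Sum>u\<in>S. wSet T w (A \<inter> Ev E u)) = (\<Sum>u\<in>V. if u \<in> S then wSet T w (A \<inter> Ev E u) else 0)"
    using sum.inter_filter[OF finV, of "\<lambda>u. wSet T w (A \<inter> Ev E u)" "\<lambda>u. u \<in> S", unfolded e] by simp
  also have "\<dots> = (\<Sum>u\<in>V. \<Sum>\<tau>\<in>A \<inter> Ev E u. if u \<in> S then wt \<tau> else 0)"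
    unfolding wSet_def by (rule sum.cong[OF refl]) simp
  also have "\<dots> = (\<Sum>\<tau>\<in>A. \<Sum>u\<in>\<tau>. if u \<in> S then wt \<tau> else 0)" by (rule swapV[OF AE])
  also have "\<dots> = (\<Sum>\<tau>\<in>A. wt \<tau> * real (card (\<tau> \<inter> S)))"
  proof (rule sum.cong[OF refl])
    fix \<tau> assume "\<tau> \<in> A"
    hence ft: "finite \<tau>" using AE fintau by blast
    have "(\<Sum>u\<in>\<tau>. if u \<in> S then wt \<tau> else 0) = (\<Sum>u\<in>{u\<in>\<tau>. u \<in> S}. wt \<tau>)"
      using sum.inter_filter[OF ft, of "\<lambda>_. wt \<tau>" "\<lambda>u. u \<in> S"] by simp
    also have "{u\<in>\<tau>. u \<in> S} = \<tau> \<inter> S" by blast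
    finally show "(\<Sum>u\<in>\<tau>. if u \<in> S then wt \<tau> else 0) = wt \<tau> * real (card (\<tau> \<inter> S))" by simp
  qed
  finally show ?thesis .
qed

lemma level_bound:
  fixes y :: "'v \<Rightarrow> real" and th C lam :: real
  assumes AE: "A \<subseteq> E" and ex: "expander V (ground_w E T w) lam" and lam: "0 \<le> lam" "lam < 1"
    and th: "0 < th" and C0: "0 \<le> C" and k1: "1 \<le> k"
    and hy: "\<And>v. v \<in> V \<Longrightarrow> th \<le> y v \<Longrightarrow> th * wSet T w (Ev E v) \<le> C * wSet T w (A \<inter> Ev E v)"
    and EW: "0 < wSet T w E"
  shows "(\<Sum>\<tau>\<in>A. wt \<tau> * (real (card {v\<in>\<tau>. th \<le> y v}) * (real (card {v\<in>\<tau>. th \<le> y v}) - 1)))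
         \<le> lam * (real k - 1) * C * (\<Sum>\<tau>\<in>A. wt \<tau> * real (card {v\<in>\<tau>. th \<le> y v})) / th
           + C\<^sup>2 * (\<Sum>\<tau>\<in>A. wt \<tau> * real (card {v\<in>\<tau>. th \<le> y v}))\<^sup>2 / (th\<^sup>2 * wSet T w E)"
proof -
  define S where "S = {v\<in>V. th \<le> y v}"
  define N where "N = (\<Sum>\<tau>\<in>A. wt \<tau> * real (card {v\<in>\<tau>. th \<le> y v}))"
  define W where "W = wSet T w E"
  have SV: "S \<subseteq> V" unfolding S_def by blast
  have finA: "finite A" using AE finE finite_subset by blast
  have tS: "{v\<in>\<tau>. th \<le> y v} = \<tau> \<inter> S" if "\<tau> \<in> A" for \<tau>
    using that AE tauV unfolding S_def by blast
  have nn: "0 \<le> wt \<tau> * (real (card (\<tau> \<inter> S)) * (real (card (\<tau> \<inter> S)) - 1))" for \<tau>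
  proof -
    have "0 \<le> real (card (\<tau> \<inter> S)) * (real (card (\<tau> \<inter> S)) - 1)"
      by (cases "card (\<tau> \<inter> S)") simp_all
    thus ?thesis using wt_nonneg by simp
  qed
  have "(\<Sum>\<tau>\<in>A. wt \<tau> * (real (card {v\<in>\<tau>. th \<le> y v}) * (real (card {v\<in>\<tau>. th \<le> y v}) - 1)))
      = (\<Sum>\<tau>\<in>A. wt \<tau> * (real (card (\<tau> \<inter> S)) * (real (card (\<tau> \<inter> S)) - 1)))"
    using tS by (intro sum.cong) simp_all
  also have "\<dots> \<le> (\<Sum>\<tau>\<in>E. wt \<tau> * (real (card (\<tau> \<inter> S)) * (real (card (\<tau> \<inter> S)) - 1)))"
    using AE finE nn by (intro sum_mono2) simp_all
  also have "\<dots> = (\<Sum>u\<in>S. \<Sum>v\<in>S. ground_w E T w u v)" by (rule ground_int[OF SV, symmetric])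
  also have "\<dots> \<le> gvol V (ground_w E T w) S * (lam + gvol V (ground_w E T w) S / gvol V (ground_w E T w) V)"
    by (rule expander_int[OF finV _ ex lam SV]) (simp add: groundw_nn)
  finally have step: "(\<Sum>\<tau>\<in>A. wt \<tau> * (real (card {v\<in>\<tau>. th \<le> y v}) * (real (card {v\<in>\<tau>. th \<le> y v}) - 1)))
      \<le> gvol V (ground_w E T w) S * (lam + gvol V (ground_w E T w) S / gvol V (ground_w E T w) V)" .
  define YS where "YS = (\<Sum>u\<in>S. wSet T w (Ev E u))"
  have gS: "gvol V (ground_w E T w) S = (real k - 1) * YS"
    unfolding gvol_def YS_def sum_distrib_left using SV ground_deg by (intro sum.cong) auto
  have gV: "gvol V (ground_w E T w) V = (real k - 1) * (real k * W)"
  proof -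
    have "gvol V (ground_w E T w) V = (real k - 1) * (\<Sum>u\<in>V. wSet T w (Ev E u))"
      unfolding gvol_def sum_distrib_left using ground_deg by (intro sum.cong) auto
    also have "(\<Sum>u\<in>V. wSet T w (Ev E u)) = (\<Sum>u\<in>V. wSet T w (E \<inter> Ev E u))"
      by (intro sum.cong refl) (simp add: Ev_def Int_absorb1)
    also have "\<dots> = real k * W" unfolding W_def by (rule sum_wSet_V) simp
    finally show ?thesis .
  qed
  have YS0: "0 \<le> YS" unfolding YS_def by (intro sum_nonneg) (simp add: wSet_nonneg)
  have YSb: "YS \<le> C * N / th"
  proof -
    have "YS \<le> (\<Sum>u\<in>S. C * wSet T w (A \<inter> Ev E u) / th)"
      unfolding YS_def using hy th unfolding S_def
      by (intro sum_mono) (simp add: pos_le_divide_eq mult.commute)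
    also have "\<dots> = C / th * (\<Sum>u\<in>S. wSet T w (A \<inter> Ev E u))"
      by (simp add: sum_distrib_left)
    also have "(\<Sum>u\<in>S. wSet T w (A \<inter> Ev E u)) = N"
      unfolding sum_a_S[OF AE SV] N_def using tS by (intro sum.cong) simp_all
    finally show ?thesis by simp
  qed
  have W0: "0 < W" unfolding W_def using EW .
  have kap: "0 \<le> real k - 1" using k1 by simp
  have "gvol V (ground_w E T w) S * (lam + gvol V (ground_w E T w) S / gvol V (ground_w E T w) V)
      = lam * ((real k - 1) * YS) + ((real k - 1) * YS)\<^sup>2 / ((real k - 1) * (((real k - 1) + 1) * W))"
    unfolding gS gV by (simp add: power2_eq_square algebra_simps)
  also have "\<dots> \<le> lam * ((real k - 1) * (C * N / th)) + YS\<^sup>2 / W"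
  proof (rule add_mono)
    show "lam * ((real k - 1) * YS) \<le> lam * ((real k - 1) * (C * N / th))"
      using lam kap YSb by (intro mult_left_mono) simp_all
    show "((real k - 1) * YS)\<^sup>2 / ((real k - 1) * (((real k - 1) + 1) * W)) \<le> YS\<^sup>2 / W"
      by (rule vol_ratio[OF kap YS0 W0])
  qed
  also have "YS\<^sup>2 / W \<le> (C * N / th)\<^sup>2 / W"
    using YS0 YSb W0 by (intro divide_right_mono power_mono) simp_all
  finally have "gvol V (ground_w E T w) S * (lam + gvol V (ground_w E T w) S / gvol V (ground_w E T w) V)
      \<le> lam * (real k - 1) * C * N / th + C\<^sup>2 * N\<^sup>2 / (th\<^sup>2 * W)"
    by (simp add: power_divide power_mult_distrib algebra_simps)
  thus ?thesis using step unfolding N_def W_def by linarith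
qed

end

lemma P_bound:
  fixes wA N P m Q :: real
  assumes wA: "0 < wA" and N0: "0 \<le> N" and m0: "0 \<le> m" and m1: "m \<le> 1/100" and Q0: "0 \<le> Q"
    and Q1: "Q * wA \<le> 1/4" and PB: "P \<le> m * N + Q * N\<^sup>2" and CS: "N\<^sup>2 \<le> wA * (P + N)"
  shows "P \<le> (27/20 * m + 91/50 * (Q * wA)) * wA"
proof -
  have Nb: "N \<le> 101/75 * wA"
  proof (cases "N = 0")
    case True thus ?thesis using wA by simp
  next
    case False
    hence Np: "0 < N" using N0 by simp
    have "wA * (P + N) \<le> wA * (m * N + Q * N\<^sup>2 + N)" using PB wA by (intro mult_left_mono) simp_all
    hence "N\<^sup>2 \<le> wA * (m * N + Q * N\<^sup>2 + N)" using CS by linarith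
    hence "N * N \<le> N * (wA * (m + 1) + (Q * wA) * N)" by (simp add: power2_eq_square algebra_simps)
    hence "N \<le> wA * (m + 1) + (Q * wA) * N" using Np by simp
    also have "\<dots> \<le> wA * (101/100) + (1/4) * N"
      using wA m1 Q1 N0 by (intro add_mono mult_left_mono mult_right_mono) simp_all
    finally show ?thesis by simp
  qed
  have "P \<le> m * N + Q * N\<^sup>2" by (rule PB)
  also have "\<dots> \<le> m * (101/75 * wA) + Q * (101/75 * wA)\<^sup>2"
    using m0 Q0 N0 Nb by (intro add_mono mult_left_mono power_mono) simp_all
  also have "\<dots> = (101/75 * m + 10201/5625 * (Q * wA)) * wA" by (simp add: power2_eq_square algebra_simps)
  also have "\<dots> \<le> (27/20 * m + 91/50 * (Q * wA)) * wA"
    using wA m0 Q0 by (intro mult_right_mono add_mono mult_right_mono) simp_all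
  finally show ?thesis .
qed

lemma choose_J:
  fixes b g :: real
  assumes b: "0 < b" and g: "0 \<le> g"
  shows "\<exists>J\<le>M. b / 2 ^ J \<le> max (2 * g) (b / 2 ^ M) \<and> (0 < J \<longrightarrow> g \<le> b / 2 ^ J)"
proof (cases "g \<le> b / 2 ^ M")
  case True
  thus ?thesis by (intro exI[of _ M]) simp
next
  case False
  define J where "J = (LEAST j. b / 2 ^ j < 2 * g)"
  have exM: "b / 2 ^ M < 2 * g" using False g by simp
  have JM: "J \<le> M" unfolding J_def using exM by (rule Least_le)
  have J1: "b / 2 ^ J < 2 * g" unfolding J_def using exM by (rule LeastI)
  have J2: "g \<le> b / 2 ^ J" if "0 < J"
  proof -
    have "J - 1 < J" using that by simp
    hence "\<not> b / 2 ^ (J - 1) < 2 * g" unfolding J_def by (rule not_less_Least)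
    hence h: "2 * g \<le> b / 2 ^ (J - 1)" by simp
    have "b / 2 ^ (J - 1) = 2 * (b / 2 ^ J)"
      using that by (cases J) simp_all
    thus ?thesis using h by simp
  qed
  show ?thesis using JM J1 J2 by (intro exI[of _ J]) simp
qed

lemma nat_m1_le: "real (n - 1) \<le> real n * (real n - 1) / 2"
proof (cases n)
  case 0 thus ?thesis by simp
next
  case (Suc m)
  have "m \<le> m * m" by (cases m) simp_all
  hence h: "real m \<le> real m * real m" using of_nat_le_iff[of m "m*m"] by simp
  show ?thesis using Suc h by (simp add: algebra_simps)
qed

lemma geom_sum_bound: "(\<Sum>i\<in>{1..J}. (2::real) ^ i) \<le> 2 * 2 ^ J"
proof (induction J)
  case 0 then show ?case by simp
next
  case (Suc J) then show ?case by (simp add: sum_Suc_1)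
qed

context TLS begin

lemma nint_bound:
  fixes Qlo Qhi lam :: real
  assumes AE: "A \<subseteq> E" and ex: "expander E (nint_w T w) lam" and lam: "0 \<le> lam" "lam < 1"
    and k1: "1 \<le> k" and Qlo: "0 < Qlo"
    and Qb: "\<And>\<sigma> \<tau>. \<sigma> \<in> T \<Longrightarrow> \<tau> \<in> \<sigma> \<Longrightarrow> Qlo \<le> real (Qnint \<tau> \<sigma>) \<and> real (Qnint \<tau> \<sigma>) \<le> Qhi"
    and EW: "0 < wSet T w E"
  shows "(\<Sum>\<tau>\<in>A. \<Sum>\<tau>'\<in>A. nint_w T w \<tau> \<tau>') \<le> Qhi * wSet T w A * (lam + Qhi * wSet T w A / (Qlo * wSet T w E))"
proof -
  have ne: "\<tau> \<noteq> {}" if "\<tau> \<in> E" for \<tau>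
    using cardE[OF that] k1 by auto
  let ?vA = "gvol E (nint_w T w) A" and ?vE = "gvol E (nint_w T w) E"
  have "(\<Sum>\<tau>\<in>A. \<Sum>\<tau>'\<in>A. nint_w T w \<tau> \<tau>') \<le> ?vA * (lam + ?vA / ?vE)"
    by (rule expander_int[OF finE _ ex lam AE]) (simp add: nintw_nn)
  moreover have vA: "?vA \<le> Qhi * wSet T w A"
  proof -
    have "?vA \<le> (\<Sum>\<tau>\<in>A. Qhi * wt \<tau>)" unfolding gvol_def
      using AE ne Qb by (intro sum_mono nint_deg_bounds(2)) auto
    thus ?thesis unfolding wSet_def by (simp add: sum_distrib_left)
  qed
  moreover have vE: "Qlo * wSet T w E \<le> ?vE"
  proof -
    have "(\<Sum>\<tau>\<in>E. Qlo * wt \<tau>) \<le> ?vE" unfolding gvol_def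
      using ne Qb by (intro sum_mono nint_deg_bounds(1)) auto
    thus ?thesis unfolding wSet_def by (simp add: sum_distrib_left)
  qed
  moreover have vA0: "0 \<le> ?vA" by (rule gvol_nonneg) (simp add: nintw_nn)
  moreover have d0: "0 < Qlo * wSet T w E" using Qlo EW by simp
  ultimately show ?thesis
  proof -
    assume h: "(\<Sum>\<tau>\<in>A. \<Sum>\<tau>'\<in>A. nint_w T w \<tau> \<tau>') \<le> ?vA * (lam + ?vA / ?vE)"
    have "?vA / ?vE \<le> ?vA / (Qlo * wSet T w E)" using vA0 vE d0 by (intro divide_left_mono) simp_all
    also have "\<dots> \<le> Qhi * wSet T w A / (Qlo * wSet T w E)" using vA d0 by (intro divide_right_mono) simp_all
    finally have r: "?vA / ?vE \<le> Qhi * wSet T w A / (Qlo * wSet T w E)" .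
    have r0: "0 \<le> ?vA / ?vE" using vA0 vE d0 by simp
    have "?vA * (lam + ?vA / ?vE) \<le> Qhi * wSet T w A * (lam + Qhi * wSet T w A / (Qlo * wSet T w E))"
      using vA vA0 r r0 lam by (intro mult_mono add_mono) simp_all
    thus ?thesis using h by linarith
  qed
qed

end

lemma eps2_bound:
  fixes s k al be rho :: real
  assumes s2: "2 \<le> s" and al: "0 \<le> al" "al < 1" and be: "0 \<le> be" "be < 1" and k1: "1 \<le> k" and rho0: "0 \<le> rho"
    and rho: "rho < 7 * (1 - al)\<^sup>2 * (1 - be) ^ 3 / (64 * (1 + 15 * be) * s ^ 3 * (s - 1) ^ 4) * (1 / k\<^sup>2)"
  shows "k * (s - 1)\<^sup>2 * sqrt rho \<le> 117/1000 * ((1 - al) * (1 - be))"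
proof -
  define c where "c = (1 - al) * (1 - be)"
  define C where "C = (s - 1)\<^sup>2"
  have C0: "0 < C" unfolding C_def using s2 by simp
  have c0: "0 < c" unfolding c_def using al be by simp
  have num: "(1 - al)\<^sup>2 * (1 - be) ^ 3 \<le> c\<^sup>2"
  proof -
    have "(1 - al)\<^sup>2 * (1 - be) ^ 3 = c\<^sup>2 * (1 - be)" unfolding c_def by (simp add: power2_eq_square power3_eq_cube)
    also have "\<dots> \<le> c\<^sup>2 * 1" using be by (intro mult_left_mono) simp_all
    finally show ?thesis by simp
  qed
  have s3: "8 \<le> s ^ 3"
  proof -
    have "2 ^ 3 \<le> s ^ 3" using s2 by (intro power_mono) simp_all
    thus ?thesis by simp
  qed
  have den: "512 * C\<^sup>2 \<le> 64 * (1 + 15 * be) * s ^ 3 * (s - 1) ^ 4"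
  proof -
    have "(s - 1) ^ 4 = C\<^sup>2" unfolding C_def by (simp add: power_mult[symmetric])
    moreover have "512 \<le> 64 * (1 + 15 * be) * s ^ 3"
    proof -
      have "64 * 1 * 8 \<le> 64 * (1 + 15 * be) * s ^ 3" using be s3 by (intro mult_mono) simp_all
      thus ?thesis by simp
    qed
    ultimately show ?thesis using C0 by (simp add: mult_right_mono)
  qed
  have k2: "0 < k\<^sup>2" using k1 by simp
  have p512: "0 < 512 * C\<^sup>2" using C0 by simp
  have dpos: "0 < 64 * (1 + 15 * be) * s ^ 3 * (s - 1) ^ 4" using den p512 by linarith
  have "rho < 7 * (1 - al)\<^sup>2 * (1 - be) ^ 3 / (64 * (1 + 15 * be) * s ^ 3 * (s - 1) ^ 4) / k\<^sup>2"
    using rho by simp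
  also have "\<dots> \<le> 7 * c\<^sup>2 / (512 * C\<^sup>2) / k\<^sup>2"
  proof -
    have "7 * (1 - al)\<^sup>2 * (1 - be) ^ 3 / (64 * (1 + 15 * be) * s ^ 3 * (s - 1) ^ 4) \<le> 7 * c\<^sup>2 / (64 * (1 + 15 * be) * s ^ 3 * (s - 1) ^ 4)"
      using num dpos by (intro divide_right_mono) simp_all
    also have "\<dots> \<le> 7 * c\<^sup>2 / (512 * C\<^sup>2)" by (rule divide_left_mono[OF den]) (simp, rule mult_pos_pos[OF dpos p512])
    finally show ?thesis using k2 by (intro divide_right_mono) simp_all
  qed
  finally have r: "rho < 7 * c\<^sup>2 / (512 * C\<^sup>2) / k\<^sup>2" .
  have "(k * C * sqrt rho)\<^sup>2 = k\<^sup>2 * C\<^sup>2 * rho" using rho0 by (simp add: power_mult_distrib)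
  also have "\<dots> \<le> k\<^sup>2 * C\<^sup>2 * (7 * c\<^sup>2 / (512 * C\<^sup>2) / k\<^sup>2)" using r k2 C0 by (intro mult_left_mono) simp_all
  also have "\<dots> = 7 * c\<^sup>2 / 512" using k2 C0 by (simp add: field_simps)
  also have "\<dots> \<le> (117/1000 * c)\<^sup>2" by (simp add: power2_eq_square)
  finally have "(k * C * sqrt rho)\<^sup>2 \<le> (117/1000 * c)\<^sup>2" .
  hence "k * C * sqrt rho \<le> 117/1000 * c"
    by (rule power2_le_imp_le) (use c0 in simp)
  thus ?thesis unfolding c_def C_def .
qed

context TLS begin

lemma core:
  fixes \<delta> \<alpha> R lam :: real and M :: nat and A :: "'v set set"
  assumes s2: "s \<ge> 2" and d0: "0 < \<delta>" and be1: "(real s - 1) * \<delta> < 1"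
    and al: "0 \<le> \<alpha>" "\<alpha> < 1" and R: "0 < R" "R \<le> 1"
    and lam: "0 < lam" "lam < 1"
    and H2: "lam * (real K + (real s - 1) * real k + real M * real k * (real s - 1)\<^sup>2)
               \<le> (1 - \<alpha>) * (1 - (real s - 1) * \<delta>) / 20"
    and H3: "lam * real k * (real s - 1)\<^sup>2 * 2 ^ M / ((real s - 1) * \<delta>) \<le> 1/100"
    and H4: "real k * ((real s - 1) * \<delta>) / 2 ^ M \<le> (1 - \<alpha>) * (1 - (real s - 1) * \<delta>) / 20"
    and Rn: "R \<le> R_nint T" and HDE: "HDE_system V E T w lam"
    and AE: "A \<subseteq> E" and Ane: "A \<noteq> {}" and ls: "locally_small V E T w \<delta> \<alpha> A"
    and small: "wSet T w A / wSet T w E <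
             min (R\<^sup>2 * (1 - \<alpha>) * (1 - (real s - 1) * \<delta>) / 4 * (1 / real K))
                  (7 * (1 - \<alpha>)\<^sup>2 * (1 - (real s - 1) * \<delta>) ^ 3
                    / (64 * (1 + 15 * (real s - 1) * \<delta>) * real s ^ 3 * (real s - 1) ^ 4)
                    * (1 / (real k)\<^sup>2))"
    and noU: "\<forall>\<sigma>\<in>T. card (A \<inter> \<sigma>) \<noteq> 1"
  shows False
proof -
  define be where "be = (real s - 1) * \<delta>"
  define c where "c = (1 - \<alpha>) * (1 - be)"
  define C where "C = (real s - 1)\<^sup>2"
  define wA where "wA = wSet T w A"
  define W where "W = wSet T w E"
  define rho where "rho = wA / W"
  have be0: "0 < be" unfolding be_def using s2 d0 by simp
  have be1': "be < 1" unfolding be_def using be1 .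
  have c0: "0 < c" unfolding c_def using al be1' by simp
  have C0: "0 < C" unfolding C_def using s2 by simp
  have finA: "finite A" using AE finE finite_subset by blast
  have wA0: "0 < wA"
  proof -
    obtain \<tau> where "\<tau> \<in> A" using Ane by blast
    hence "wt \<tau> \<le> wA" unfolding wA_def wSet_def using finA wt_nonneg by (intro member_le_sum) simp_all
    thus ?thesis using wt_pos \<open>\<tau> \<in> A\<close> AE by force
  qed
  have wAW: "wA \<le> W" unfolding wA_def W_def wSet_def using AE finE wt_nonneg by (intro sum_mono2) simp_all
  have W0: "0 < W" using wA0 wAW by simp
  have rho0: "0 < rho" unfolding rho_def using wA0 W0 by simp
  have sm: "rho < R\<^sup>2 * (1 - \<alpha>) * (1 - be) / 4 * (1 / real K)"
     "rho < 7 * (1 - \<alpha>)\<^sup>2 * (1 - be) ^ 3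
                    / (64 * (1 + 15 * (real s - 1) * \<delta>) * real s ^ 3 * (real s - 1) ^ 4)
                    * (1 / (real k)\<^sup>2)"
    using small unfolding min_less_iff_conj rho_def wA_def W_def be_def by simp_all
  have e15: "15 * (real s - 1) * \<delta> = 15 * be" unfolding be_def by simp
  have small1: "rho < R\<^sup>2 * c / 4 * (1 / real K)" using sm(1) unfolding c_def by (simp add: mult.assoc)
  have small2: "rho < 7 * (1 - \<alpha>)\<^sup>2 * (1 - be) ^ 3 / (64 * (1 + 15 * be) * real s ^ 3 * (real s - 1) ^ 4) * (1 / (real k)\<^sup>2)"
    using sm(2) unfolding e15 .
  have k1: "1 \<le> k"
  proof (rule ccontr)
    assume "\<not> 1 \<le> k" hence "k = 0" by simp
    thus False using small2 rho0 by simp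
  qed
  have K1: "1 \<le> K"
  proof (rule ccontr)
    assume "\<not> 1 \<le> K" hence "K = 0" by simp
    thus False using small1 rho0 by simp
  qed
  obtain \<tau>0 where t0A: "\<tau>0 \<in> A" using Ane by blast
  have t0E: "\<tau>0 \<in> E" using t0A AE by blast
  obtain \<sigma>0 where s0: "\<sigma>0 \<in> T" "\<tau>0 \<in> \<sigma>0" using t0E UT by blast
  have t0ne: "\<tau>0 \<noteq> {}" using cardE[OF t0E] k1 by auto
  have QK: "Qnint \<tau> \<sigma> \<le> K" if "\<sigma> \<in> T" for \<sigma> \<tau>
  proof -
    have "Qnint \<tau> \<sigma> \<le> card \<sigma>" unfolding Qnint_def using finsig[OF that] by (intro card_mono) auto
    thus ?thesis using cardT[OF that] by simp
  qed
  define Qs where "Qs = {Qnint \<tau> \<sigma> | \<tau> \<sigma>. \<sigma> \<in> T \<and> \<tau> \<in> \<sigma>}"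
  have Qsfin: "finite Qs"
  proof (rule finite_subset)
    show "Qs \<subseteq> {..K}" unfolding Qs_def using QK by blast
  qed simp
  have Qmem: "Qnint \<tau> \<sigma> \<in> Qs" if "\<sigma> \<in> T" "\<tau> \<in> \<sigma>" for \<sigma> \<tau> unfolding Qs_def using that by blast
  have Qsne: "Qs \<noteq> {}" using Qmem[OF s0] by blast
  define Qlo where "Qlo = Min Qs"
  define Qhi where "Qhi = Max Qs"
  have Rdef: "R_nint T = real Qlo / real Qhi" unfolding R_nint_def Qlo_def Qhi_def Qs_def by simp
  have Qb: "Qlo \<le> Qnint \<tau> \<sigma> \<and> Qnint \<tau> \<sigma> \<le> Qhi" if "\<sigma> \<in> T" "\<tau> \<in> \<sigma>" for \<sigma> \<tau>
    unfolding Qlo_def Qhi_def using Qsfin Qmem[OF that] by simp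
  have Qhi0: "0 < Qhi"
  proof (rule ccontr)
    assume "\<not> 0 < Qhi" hence "Qhi = 0" by simp
    hence "R_nint T = 0" unfolding Rdef by simp
    thus False using Rn R by simp
  qed
  have Qlo0: "0 < Qlo"
  proof (rule ccontr)
    assume "\<not> 0 < Qlo" hence "Qlo = 0" by simp
    hence "R_nint T = 0" unfolding Rdef by simp
    thus False using Rn R by simp
  qed
  have QhiK: "Qhi \<le> K"
  proof -
    have "Qhi \<in> Qs" unfolding Qhi_def using Qsfin Qsne by simp
    then obtain \<tau> \<sigma> where "Qhi = Qnint \<tau> \<sigma>" "\<sigma> \<in> T" unfolding Qs_def by blast
    thus ?thesis using QK by simp
  qed
  have ratio: "real Qhi / real Qlo \<le> 1 / R"
  proof -
    have "R \<le> real Qlo / real Qhi" using Rn Rdef by simp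
    hence "R * real Qhi \<le> real Qlo" using Qhi0 by (simp add: le_divide_eq)
    thus ?thesis using R Qlo0 Qhi0 by (simp add: divide_le_eq le_divide_eq mult.commute)
  qed
  have edges: "nint_has_edges T"
  proof -
    have "1 \<le> Qnint \<tau>0 \<sigma>0" using Qb[OF s0] Qlo0 by simp
    hence "{\<tau>'\<in>\<sigma>0. \<tau>0 \<inter> \<tau>' = {}} \<noteq> {}" unfolding Qnint_def by (metis card.empty not_one_le_zero)
    then obtain \<tau>' where t': "\<tau>' \<in> \<sigma>0" "\<tau>0 \<inter> \<tau>' = {}" by blast
    have "\<tau>0 \<noteq> \<tau>'" using t'(2) t0ne by blast
    thus ?thesis unfolding nint_has_edges_def using s0 t' by blast
  qed
  have exN: "expander E (nint_w T w) lam" using HDE edges unfolding HDE_system_def by blast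
  have exG: "expander V (ground_w E T w) lam" using HDE unfolding HDE_system_def by blast
  have exL: "\<And>v. v \<in> V \<Longrightarrow> expander (Ev E v) (link_w T w) lam" using HDE unfolding HDE_system_def by blast
  define Jn where "Jn = (\<Sum>\<tau>\<in>A. \<Sum>\<tau>'\<in>A. nint_w T w \<tau> \<tau>')"
  have Jn1: "Jn \<le> real Qhi * wA * (lam + real Qhi * wA / (real Qlo * W))"
    unfolding Jn_def wA_def W_def
    using Qb Qlo0 W0 unfolding W_def
    by (intro nint_bound[OF AE exN _ _ k1]) (simp_all add: less_imp_le lam)
  have Jn2: "Jn < real K * lam * wA + c / 4 * wA"
  proof -
    have a1: "real Qhi * wA * lam \<le> real K * lam * wA" using QhiK lam wA0 by (simp add: mult_right_mono mult.commute mult.left_commute)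
    have "real Qhi * wA * (real Qhi * wA / (real Qlo * W)) = (real Qhi * (real Qhi / real Qlo)) * rho * wA"
      unfolding rho_def by (simp add: field_simps)
    also have "\<dots> \<le> (real K * (1 / R)) * rho * wA"
      using QhiK ratio rho0 wA0 Qlo0 by (intro mult_right_mono mult_mono) simp_all
    also have "\<dots> < (real K * (1 / R)) * (R\<^sup>2 * c / 4 * (1 / real K)) * wA"
      using small1 wA0 K1 R by (intro mult_strict_right_mono mult_strict_left_mono) simp_all
    also have "\<dots> = R * c / 4 * wA" using K1 R by (simp add: power2_eq_square field_simps)
    also have "\<dots> \<le> c / 4 * wA" using R c0 wA0 by (simp add: mult_le_cancel_right1 mult_right_le_one_le)
    finally have a2: "real Qhi * wA * (real Qhi * wA / (real Qlo * W)) < c / 4 * wA" .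
    have e: "real Qhi * wA * (lam + real Qhi * wA / (real Qlo * W)) = real Qhi * wA * lam + real Qhi * wA * (real Qhi * wA / (real Qlo * W))"
      by (simp only: distrib_left)
    show ?thesis using Jn1 a1 a2 e by linarith
  qed
  define L where "L = {v\<in>V. \<not> delta_large E T w \<delta> A v}"
  define A' where "A' = {\<tau>\<in>A. \<tau> \<subseteq> L}"
  define a where "a v = wSet T w (A \<inter> Ev E v)" for v
  define Wv where "Wv v = wSet T w (Ev E v)" for v
  define Mv where "Mv v = link_vol E T w v (A \<inter> Ev E v)" for v
  define Dv where "Dv v = link_vol E T w v (Ev E v)" for v
  define y where "y v = min be (C * (a v / Wv v))" for v
  have LV: "L \<subseteq> V" unfolding L_def by blast
  have a0: "0 \<le> a v" for v unfolding a_def by (rule wSet_nonneg)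
  have aM: "a v \<le> Mv v" for v unfolding a_def Mv_def by (rule M_bounds(1)[OF AE])
  have Ms: "Mv v \<le> (real s - 1) * a v" for v unfolding a_def Mv_def by (rule M_bounds(2)[OF AE])
  have Wpos: "0 < Wv v" if "v \<in> V" for v unfolding Wv_def using Wv_pos[OF that] .
  have W0': "0 \<le> Wv v" for v unfolding Wv_def by (rule wSet_nonneg)
  have WD: "Wv v \<le> Dv v" for v unfolding Wv_def Dv_def by (rule D_ge)
  have y0: "0 \<le> y v" for v unfolding y_def using be0 C0 a0[of v] W0'[of v] by simp
  have yb: "y v \<le> be" for v unfolding y_def by simp
  have s1: "0 \<le> real s - 1" using s2 by simp
  have yH: "y v = be" if "v \<in> V" "v \<notin> L" for v
  proof -
    have "delta_large E T w \<delta> A v" using that unfolding L_def by blast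
    hence lg: "\<delta> \<le> Mv v / Dv v" unfolding delta_large_def Mv_def Dv_def by simp
    have "(real s - 1) * \<delta> \<le> (real s - 1)\<^sup>2 * (a v / Wv v)"
      by (rule large_arith[OF a0 Ms Wpos[OF that(1)] WD lg s1])
    thus ?thesis unfolding y_def be_def C_def by simp
  qed
  have hy: "th * Wv v \<le> C * a v" if "v \<in> V" "th \<le> y v" for v th
  proof -
    have "th \<le> C * (a v / Wv v)" using that(2) unfolding y_def by simp
    thus ?thesis using Wpos[OF that(1)] by (simp add: le_divide_eq mult.commute)
  qed
  have finVL: "finite (V - L)" using finV by simp
  have lsum: "(\<Sum>v\<in>V - L. Mv v) \<le> \<alpha> * wA"
  proof -
    have "{v\<in>V. delta_large E T w \<delta> A v} = V - L" unfolding L_def by blast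
    thus ?thesis using ls unfolding locally_small_def Mv_def wA_def by simp
  qed
  have wA'b: "(1 - \<alpha>) * wA \<le> wSet T w A'"
  proof -
    have A'A: "A' \<subseteq> A" unfolding A'_def by blast
    have split: "wA = wSet T w A' + wSet T w (A - A')"
      unfolding wA_def wSet_def using finA A'A by (simp add: sum.subset_diff)
    have "wSet T w (A - A') \<le> (\<Sum>\<tau>\<in>A - A'. wt \<tau> * real (card (\<tau> \<inter> (V - L))))"
      unfolding wSet_def
    proof (rule sum_mono)
      fix \<tau> assume tA: "\<tau> \<in> A - A'"
      hence tE: "\<tau> \<in> E" using AE by blast
      have "\<not> \<tau> \<subseteq> L" using tA unfolding A'_def by blast
      hence "\<tau> \<inter> (V - L) \<noteq> {}" using tauV[OF tE] by blast
      hence "1 \<le> card (\<tau> \<inter> (V - L))" using fintau[OF tE] by (simp add: Suc_le_eq card_gt_0_iff)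
      thus "wt \<tau> \<le> wt \<tau> * real (card (\<tau> \<inter> (V - L)))" using wt_nonneg[of \<tau>]
        by (simp add: mult_le_cancel_left1)
    qed
    also have "\<dots> \<le> (\<Sum>\<tau>\<in>A. wt \<tau> * real (card (\<tau> \<inter> (V - L))))"
      using finA wt_nonneg by (intro sum_mono2) simp_all
    also have "\<dots> = (\<Sum>v\<in>V - L. a v)" unfolding a_def by (rule sum_a_S[OF AE, symmetric]) blast
    also have "\<dots> \<le> (\<Sum>v\<in>V - L. Mv v)" using aM by (intro sum_mono) simp
    also have "\<dots> \<le> \<alpha> * wA" by (rule lsum)
    finally show ?thesis using split by (simp add: algebra_simps)
  qed
  define I where "I v = (\<Sum>\<tau>\<in>A \<inter> Ev E v. \<Sum>\<tau>'\<in>A \<inter> Ev E v. link_w T w \<tau> \<tau>')" for v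
  have wit: "wSet T w A' \<le> Jn + (\<Sum>v\<in>L. I v)"
    unfolding A'_def Jn_def I_def by (rule witness[OF AE LV noU])
  have Ib: "I v \<le> lam * (real s - 1) * a v + a v * y v" if "v \<in> L" for v
  proof -
    have vV: "v \<in> V" using that LV by blast
    have "I v \<le> Mv v * (lam + Mv v / Dv v)" unfolding I_def Mv_def Dv_def
      using lam by (intro link_int[OF AE exL[OF vV]]) simp_all
    also have "\<dots> \<le> lam * (real s - 1) * a v + a v * min ((real s - 1) * \<delta>) ((real s - 1)\<^sup>2 * (a v / Wv v))"
    proof (rule light_arith[OF a0 aM Ms Wpos[OF vV] WD])
      show "Mv v / Dv v < \<delta>" using that unfolding L_def delta_large_def Mv_def Dv_def by simp
    qed (use lam in simp)
    finally show ?thesis unfolding y_def be_def C_def .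
  qed
  have sumI: "(\<Sum>v\<in>L. I v) \<le> lam * (real s - 1) * (real k * wA) + (\<Sum>v\<in>L. a v * y v)"
  proof -
    have "(\<Sum>v\<in>L. I v) \<le> (\<Sum>v\<in>L. lam * (real s - 1) * a v + a v * y v)" using Ib by (rule sum_mono)
    also have "\<dots> = lam * (real s - 1) * (\<Sum>v\<in>L. a v) + (\<Sum>v\<in>L. a v * y v)"
      by (simp add: sum.distrib sum_distrib_left)
    also have "(\<Sum>v\<in>L. a v) \<le> real k * wA"
    proof -
      have "(\<Sum>v\<in>L. a v) \<le> (\<Sum>v\<in>V. a v)" using finV LV a0 by (intro sum_mono2) simp_all
      also have "\<dots> = real k * wA" unfolding a_def wA_def by (rule sum_wSet_V[OF AE])
      finally show ?thesis .
    qed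
    hence "lam * (real s - 1) * (\<Sum>v\<in>L. a v) \<le> lam * (real s - 1) * (real k * wA)"
      using lam s1 by (intro mult_left_mono) simp_all
    finally show ?thesis by simp
  qed
  have sumy: "(\<Sum>v\<in>L. a v * y v) = (\<Sum>\<tau>\<in>A. wt \<tau> * (\<Sum>v\<in>\<tau> \<inter> L. y v))"
  proof -
    have e: "{x\<in>V. x \<in> L} = L" using LV by blast
    have "(\<Sum>v\<in>L. a v * y v) = (\<Sum>v\<in>V. if v \<in> L then a v * y v else 0)"
      using sum.inter_filter[OF finV, of "\<lambda>v. a v * y v" "\<lambda>v. v \<in> L", unfolded e] by simp
    also have "\<dots> = (\<Sum>v\<in>V. \<Sum>\<tau>\<in>A \<inter> Ev E v. if v \<in> L then wt \<tau> * y v else 0)"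
      unfolding a_def wSet_def by (rule sum.cong[OF refl]) (simp add: sum_distrib_right)
    also have "\<dots> = (\<Sum>\<tau>\<in>A. \<Sum>v\<in>\<tau>. if v \<in> L then wt \<tau> * y v else 0)" by (rule swapV[OF AE])
    also have "\<dots> = (\<Sum>\<tau>\<in>A. wt \<tau> * (\<Sum>v\<in>\<tau> \<inter> L. y v))"
    proof (rule sum.cong[OF refl])
      fix \<tau> assume "\<tau> \<in> A"
      hence ft: "finite \<tau>" using AE fintau by blast
      have "(\<Sum>v\<in>\<tau>. if v \<in> L then wt \<tau> * y v else 0) = (\<Sum>v\<in>{v\<in>\<tau>. v \<in> L}. wt \<tau> * y v)"
        using sum.inter_filter[OF ft, of "\<lambda>v. wt \<tau> * y v" "\<lambda>v. v \<in> L"] by simp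
      also have "{v\<in>\<tau>. v \<in> L} = \<tau> \<inter> L" by blast
      finally show "(\<Sum>v\<in>\<tau>. if v \<in> L then wt \<tau> * y v else 0) = wt \<tau> * (\<Sum>v\<in>\<tau> \<inter> L. y v)"
        by (simp add: sum_distrib_left)
    qed
    finally show ?thesis .
  qed
  define g where "g = 2 * C * sqrt rho"
  have g0: "0 < g" unfolding g_def using C0 rho0 by simp
  obtain J where JM: "J \<le> M" and Jmax: "be / 2 ^ J \<le> max (2 * g) (be / 2 ^ M)"
    and Jg: "0 < J \<longrightarrow> g \<le> be / 2 ^ J"
    using choose_J[OF be0, of g M] g0 by auto
  define th where "th i = be / 2 ^ i" for i :: nat
  define n where "n \<tau> i = card {v\<in>\<tau>. th i \<le> y v}" for \<tau> i
  define X where "X i = (\<Sum>\<tau>\<in>A. wt \<tau> * real (n \<tau> i - 1))" for i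
  have th0: "0 < th i" for i unfolding th_def using be0 by simp
  have faceb: "(\<Sum>\<tau>\<in>A. wt \<tau> * (\<Sum>v\<in>\<tau> \<inter> L. y v))
      \<le> be * wSet T w A' + (real k - 1) * (be / 2 ^ J) * wA + (\<Sum>i\<in>{1..J}. th i * X i)"
  proof -
    have "(\<Sum>\<tau>\<in>A. wt \<tau> * (\<Sum>v\<in>\<tau> \<inter> L. y v))
        \<le> (\<Sum>\<tau>\<in>A. wt \<tau> * (be * (if \<tau> \<subseteq> L then 1 else 0) + real (card \<tau> - 1) * (be / 2 ^ J)
             + (\<Sum>i\<in>{1..J}. (be / 2 ^ i) * real (card {v\<in>\<tau>. be / 2 ^ i \<le> y v} - 1))))"
    proof (rule sum_mono)
      fix \<tau> assume tA: "\<tau> \<in> A"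
      hence tE: "\<tau> \<in> E" using AE by blast
      have ne: "\<tau> \<noteq> {}" using cardE[OF tE] k1 by auto
      show "wt \<tau> * (\<Sum>v\<in>\<tau> \<inter> L. y v) \<le> wt \<tau> * (be * (if \<tau> \<subseteq> L then 1 else 0) + real (card \<tau> - 1) * (be / 2 ^ J)
             + (\<Sum>i\<in>{1..J}. (be / 2 ^ i) * real (card {v\<in>\<tau>. be / 2 ^ i \<le> y v} - 1)))"
      proof (rule mult_left_mono[OF _ wt_nonneg])
        show "(\<Sum>v\<in>\<tau> \<inter> L. y v) \<le> be * (if \<tau> \<subseteq> L then 1 else 0) + real (card \<tau> - 1) * (be / 2 ^ J)
             + (\<Sum>i\<in>{1..J}. (be / 2 ^ i) * real (card {v\<in>\<tau>. be / 2 ^ i \<le> y v} - 1))"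
        proof (rule face_level[OF fintau[OF tE] ne])
          show "\<And>v. v \<in> \<tau> \<Longrightarrow> 0 \<le> y v" by (rule y0)
          show "\<And>v. v \<in> \<tau> \<Longrightarrow> y v \<le> be" by (rule yb)
          show "\<And>v. v \<in> \<tau> \<Longrightarrow> v \<notin> L \<Longrightarrow> y v = be" using yH tauV[OF tE] by blast
        qed
      qed
    qed
    also have "\<dots> = be * (\<Sum>\<tau>\<in>A. wt \<tau> * (if \<tau> \<subseteq> L then 1 else 0)) + (real k - 1) * (be / 2 ^ J) * (\<Sum>\<tau>\<in>A. wt \<tau>)
        + (\<Sum>i\<in>{1..J}. th i * X i)"
    proof -
      have "(\<Sum>\<tau>\<in>A. wt \<tau> * (be * (if \<tau> \<subseteq> L then 1 else 0) + real (card \<tau> - 1) * (be / 2 ^ J)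
             + (\<Sum>i\<in>{1..J}. (be / 2 ^ i) * real (card {v\<in>\<tau>. be / 2 ^ i \<le> y v} - 1))))
          = (\<Sum>\<tau>\<in>A. be * (wt \<tau> * (if \<tau> \<subseteq> L then 1 else 0)) + (real k - 1) * (be / 2 ^ J) * wt \<tau>
             + (\<Sum>i\<in>{1..J}. th i * (wt \<tau> * real (n \<tau> i - 1))))"
      proof (rule sum.cong[OF refl])
        fix \<tau> assume "\<tau> \<in> A"
        hence ck: "card \<tau> = k" using AE cardE by blast
        have rk: "real (k - 1) = real k - 1" using k1 by (simp add: of_nat_diff)
        show "wt \<tau> * (be * (if \<tau> \<subseteq> L then 1 else 0) + real (card \<tau> - 1) * (be / 2 ^ J)
             + (\<Sum>i\<in>{1..J}. (be / 2 ^ i) * real (card {v\<in>\<tau>. be / 2 ^ i \<le> y v} - 1)))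
          = be * (wt \<tau> * (if \<tau> \<subseteq> L then 1 else 0)) + (real k - 1) * (be / 2 ^ J) * wt \<tau>
             + (\<Sum>i\<in>{1..J}. th i * (wt \<tau> * real (n \<tau> i - 1)))"
          unfolding ck rk th_def n_def by (simp add: distrib_left sum_distrib_left mult.commute mult.left_commute)
      qed
      also have "\<dots> = be * (\<Sum>\<tau>\<in>A. wt \<tau> * (if \<tau> \<subseteq> L then 1 else 0)) + (real k - 1) * (be / 2 ^ J) * (\<Sum>\<tau>\<in>A. wt \<tau>)
             + (\<Sum>\<tau>\<in>A. \<Sum>i\<in>{1..J}. th i * (wt \<tau> * real (n \<tau> i - 1)))"
        by (simp add: sum.distrib sum_distrib_left)
      also have "(\<Sum>\<tau>\<in>A. \<Sum>i\<in>{1..J}. th i * (wt \<tau> * real (n \<tau> i - 1))) = (\<Sum>i\<in>{1..J}. th i * X i)"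
        unfolding X_def by (subst sum.swap) (simp add: sum_distrib_left)
      finally show ?thesis .
    qed
    also have "(\<Sum>\<tau>\<in>A. wt \<tau> * (if \<tau> \<subseteq> L then 1 else 0)) = wSet T w A'"
      unfolding A'_def wSet_def using sum.inter_filter[OF finA, of wt "\<lambda>\<tau>. \<tau> \<subseteq> L"]
      by (simp add: if_distrib[of "(*) (wt _)"] cong: if_cong)
    also have "(\<Sum>\<tau>\<in>A. wt \<tau>) = wA" unfolding wA_def wSet_def ..
    finally show ?thesis .
  qed
  have levb: "th i * X i \<le> (27/40 * (lam * (real k - 1) * C) + 91/100 * (C\<^sup>2 * rho / th i)) * wA"
    if iJ: "i \<in> {1..J}" for i
  proof -
    have J0: "0 < J" using iJ by simp
    have thJ: "be / 2 ^ J \<le> th i" unfolding th_def using iJ be0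
      by (intro divide_left_mono power_increasing) simp_all
    have gth: "g \<le> th i" using Jg J0 thJ by simp
    have thM: "be / 2 ^ M \<le> th i" unfolding th_def using iJ JM be0
      by (intro divide_left_mono power_increasing) simp_all
    define N where "N = (\<Sum>\<tau>\<in>A. wt \<tau> * real (n \<tau> i))"
    define P where "P = (\<Sum>\<tau>\<in>A. wt \<tau> * (real (n \<tau> i) * (real (n \<tau> i) - 1)))"
    define m where "m = lam * (real k - 1) * C / th i"
    define Q where "Q = C\<^sup>2 / ((th i)\<^sup>2 * W)"
    have N0: "0 \<le> N" unfolding N_def using wt_nonneg by (intro sum_nonneg) simp
    have PB0: "P \<le> lam * (real k - 1) * C * N / th i + C\<^sup>2 * N\<^sup>2 / ((th i)\<^sup>2 * W)"
      unfolding P_def N_def n_def W_def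
      using hy unfolding Wv_def a_def
      by (intro level_bound[OF AE exG _ _ th0 _ k1]) (simp_all add: lam less_imp_le C0 W0[unfolded W_def])
    have PB: "P \<le> m * N + Q * N\<^sup>2" using PB0 unfolding m_def Q_def by simp
    have CS: "N\<^sup>2 \<le> wA * (P + N)"
    proof -
      have "N\<^sup>2 \<le> (\<Sum>\<tau>\<in>A. wt \<tau>) * (\<Sum>\<tau>\<in>A. wt \<tau> * (real (n \<tau> i))\<^sup>2)"
        unfolding N_def using finA wt_nonneg by (intro wCS) simp_all
      also have "(\<Sum>\<tau>\<in>A. wt \<tau> * (real (n \<tau> i))\<^sup>2) = P + N"
        unfolding P_def N_def by (simp add: sum.distrib[symmetric] power2_eq_square algebra_simps)
      finally show ?thesis unfolding wA_def wSet_def .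
    qed
    have m0: "0 \<le> m" unfolding m_def using lam k1 C0 th0[of i] by simp
    have m1: "m \<le> 1/100"
    proof -
      have "m \<le> lam * real k * C / th i" unfolding m_def using lam C0 th0[of i]
        by (intro divide_right_mono mult_right_mono) simp_all
      also have "\<dots> \<le> lam * real k * C / (be / 2 ^ M)" using thM lam C0 be0 th0[of i]
        by (intro divide_left_mono) simp_all
      also have "\<dots> = lam * real k * (real s - 1)\<^sup>2 * 2 ^ M / ((real s - 1) * \<delta>)"
        unfolding C_def be_def by simp
      also have "\<dots> \<le> 1/100" by (rule H3)
      finally show ?thesis .
    qed
    have Q0: "0 \<le> Q" unfolding Q_def using W0 by simp
    have Q1: "Q * wA \<le> 1/4"
    proof -
      have "Q * wA = C\<^sup>2 * rho / (th i)\<^sup>2" unfolding Q_def rho_def using W0 by simp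
      also have "\<dots> \<le> C\<^sup>2 * rho / g\<^sup>2" using gth g0 C0 rho0 by (intro divide_left_mono power_mono) simp_all
      also have "g\<^sup>2 = 4 * (C\<^sup>2 * rho)" unfolding g_def using rho0 by (simp add: power_mult_distrib)
      also have "C\<^sup>2 * rho / (4 * (C\<^sup>2 * rho)) = 1/4" using C0 rho0 by simp
      finally show ?thesis .
    qed
    have Pb: "P \<le> (27/20 * m + 91/50 * (Q * wA)) * wA" by (rule P_bound[OF wA0 N0 m0 m1 Q0 Q1 PB CS])
    have XP: "X i \<le> P / 2"
    proof -
      have "X i \<le> (\<Sum>\<tau>\<in>A. wt \<tau> * (real (n \<tau> i) * (real (n \<tau> i) - 1) / 2))"
        unfolding X_def using wt_nonneg nat_m1_le by (intro sum_mono mult_left_mono) simp_all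
      also have "\<dots> = P / 2" unfolding P_def by (simp add: sum_divide_distrib)
      finally show ?thesis .
    qed
    have "th i * X i \<le> th i * (P / 2)" using XP th0[of i] by (intro mult_left_mono) simp_all
    also have "\<dots> \<le> th i * ((27/20 * m + 91/50 * (Q * wA)) * wA / 2)" using Pb th0[of i] by (intro mult_left_mono) simp_all
    also have "\<dots> = (27/40 * (th i * m) + 91/100 * (th i * Q * wA)) * wA" by (simp add: algebra_simps)
    also have "th i * m = lam * (real k - 1) * C" unfolding m_def using th0[of i] by simp
    also have "th i * Q * wA = C\<^sup>2 * rho / th i" unfolding Q_def rho_def using th0[of i] W0
      by (simp add: power2_eq_square)
    finally show ?thesis .
  qed
  have sumlev: "(\<Sum>i\<in>{1..J}. th i * X i) \<le> (27/40 * real M * lam * real k * C + 91/100 * (C * sqrt rho)) * wA"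
  proof -
    have "(\<Sum>i\<in>{1..J}. th i * X i) \<le> (\<Sum>i\<in>{1..J}. (27/40 * (lam * (real k - 1) * C) + 91/100 * (C\<^sup>2 * rho / th i)) * wA)"
      using levb by (rule sum_mono)
    also have "\<dots> = real J * (27/40 * (lam * (real k - 1) * C)) * wA + 91/100 * (C\<^sup>2 * rho / be) * wA * (\<Sum>i\<in>{1..J}. 2 ^ i)"
      unfolding th_def by (simp add: sum.distrib sum_distrib_left sum_distrib_right sum_divide_distrib algebra_simps)
    also have "\<dots> \<le> 27/40 * real M * lam * real k * C * wA + 91/100 * (C * sqrt rho) * wA"
    proof (rule add_mono)
      show "real J * (27/40 * (lam * (real k - 1) * C)) * wA \<le> 27/40 * real M * lam * real k * C * wA"
      proof -
        have "real J * (lam * (real k - 1) * C) \<le> real M * (lam * real k * C)"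
          using JM lam C0 k1 by (intro mult_mono) simp_all
        hence "(27/40 * wA) * (real J * (lam * (real k - 1) * C)) \<le> (27/40 * wA) * (real M * (lam * real k * C))"
          using wA0 by (intro mult_left_mono) simp_all
        moreover have "real J * (27/40 * (lam * (real k - 1) * C)) * wA = (27/40 * wA) * (real J * (lam * (real k - 1) * C))"
          by (simp add: algebra_simps)
        moreover have "27/40 * real M * lam * real k * C * wA = (27/40 * wA) * (real M * (lam * real k * C))"
          by (simp add: algebra_simps)
        ultimately show ?thesis by (simp add: ac_simps)
      qed
      show "91/100 * (C\<^sup>2 * rho / be) * wA * (\<Sum>i\<in>{1..J}. 2 ^ i) \<le> 91/100 * (C * sqrt rho) * wA"
      proof (cases "J = 0")
        case True thus ?thesis using C0 rho0 wA0 by simp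
      next
        case False
        hence gJ: "g \<le> be / 2 ^ J" using Jg by simp
        have "(C\<^sup>2 * rho / be) * (\<Sum>i\<in>{1..J}. 2 ^ i) \<le> (C\<^sup>2 * rho / be) * (2 * 2 ^ J)"
          using C0 rho0 be0 geom_sum_bound by (intro mult_left_mono) simp_all
        also have "\<dots> = 2 * (C\<^sup>2 * rho / (be / 2 ^ J))" by simp
        also have "\<dots> \<le> 2 * (C\<^sup>2 * rho / g)" using gJ g0 C0 rho0 be0 by (intro mult_left_mono divide_left_mono) simp_all
        also have "\<dots> = C * (rho / sqrt rho)" unfolding g_def using C0 rho0
          by (simp add: power2_eq_square)
        also have "\<dots> = C * sqrt rho" using rho0 by (simp add: real_div_sqrt)
        finally have "(C\<^sup>2 * rho / be) * (\<Sum>i\<in>{1..J}. 2 ^ i) \<le> C * sqrt rho" .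
        hence "(91/100 * wA) * ((C\<^sup>2 * rho / be) * (\<Sum>i\<in>{1..J}. 2 ^ i)) \<le> (91/100 * wA) * (C * sqrt rho)"
          using wA0 by (intro mult_left_mono) simp_all
        thus ?thesis by (simp add: ac_simps)
      qed
    qed
    finally show ?thesis by (simp add: algebra_simps)
  qed
  have eps: "real k * C * sqrt rho \<le> 117/1000 * c"
    unfolding C_def c_def
    by (rule eps2_bound) (use s2 al be0 be1' k1 rho0 small2 in \<open>simp_all add: less_imp_le\<close>)
  define Z where "Z = C * sqrt rho"
  have Z0: "0 \<le> Z" unfolding Z_def using C0 rho0 by simp
  have kZ: "Z \<le> real k * Z" using k1 Z0 by (simp add: mult_le_cancel_right1)
  have F1: "wSet T w A' - be * wSet T w A' \<le> Jn + lam * (real s - 1) * (real k * wA)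
              + (real k - 1) * (be / 2 ^ J) * wA + (\<Sum>i\<in>{1..J}. th i * X i)"
    using wit sumI sumy faceb by linarith
  have F2: "c * wA \<le> wSet T w A' - be * wSet T w A'"
  proof -
    have "(1 - be) * ((1 - \<alpha>) * wA) \<le> (1 - be) * wSet T w A'" using wA'b be1' by (intro mult_left_mono) simp_all
    thus ?thesis unfolding c_def by (simp add: algebra_simps)
  qed
  have F3: "(real k - 1) * (be / 2 ^ J) * wA \<le> 4 * (real k * Z) * wA + real k * (be / 2 ^ M) * wA"
  proof -
    have "(real k - 1) * (be / 2 ^ J) \<le> real k * (2 * g + be / 2 ^ M)"
    proof (rule mult_mono)
      have p: "0 \<le> be / 2 ^ M" using be0 by simp
      show "be / 2 ^ J \<le> 2 * g + be / 2 ^ M" using Jmax g0 p unfolding max_def by (auto split: if_splits)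
    qed (use be0 g0 in simp_all)
    hence "(real k - 1) * (be / 2 ^ J) * wA \<le> real k * (2 * g + be / 2 ^ M) * wA" using wA0 by (intro mult_right_mono) simp_all
    thus ?thesis unfolding g_def Z_def by (simp add: algebra_simps)
  qed
  have F4: "lam * (real K + (real s - 1) * real k + real M * real k * C) * wA \<le> c / 20 * wA"
    using H2 wA0 unfolding c_def be_def C_def by (intro mult_right_mono) simp_all
  have F4': "real K * lam * wA + lam * (real s - 1) * (real k * wA) + 27/40 * real M * lam * real k * C * wA
             \<le> lam * (real K + (real s - 1) * real k + real M * real k * C) * wA"
  proof -
    have "0 \<le> 13/40 * real M * lam * real k * C * wA" using lam C0 wA0 by simp
    thus ?thesis by (simp add: algebra_simps)
  qed
  have F5: "real k * (be / 2 ^ M) * wA \<le> c / 20 * wA"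
    using H4 wA0 unfolding c_def be_def by (intro mult_right_mono) simp_all
  have F6: "real k * Z * wA \<le> 117/1000 * c * wA" using eps wA0 unfolding Z_def by (intro mult_right_mono) simp_all
  have F7: "Z * wA \<le> real k * Z * wA" using kZ wA0 by (intro mult_right_mono) simp_all
  have sl: "(\<Sum>i\<in>{1..J}. th i * X i) \<le> 27/40 * real M * lam * real k * C * wA + 91/100 * (Z * wA)"
    using sumlev unfolding Z_def by (simp add: algebra_simps)
  have "c * wA < (c / 4 + c / 20 + c / 20 + 491/100 * (117/1000 * c)) * wA"
    using F1 F2 F3 F4 F4' F5 F6 F7 sl Jn2 by (simp add: algebra_simps)
  moreover have "(c / 4 + c / 20 + c / 20 + 491/100 * (117/1000 * c)) * wA \<le> c * wA"
    using c0 wA0 by (intro mult_right_mono) simp_all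
  ultimately show False by simp
qed

end

lemma lam_choice:
  fixes c b D F :: real
  assumes c0: "0 < c" and b0: "0 < b" and D0: "0 \<le> D" and F0: "0 \<le> F"
  shows "\<exists>lam. 0 < lam \<and> lam < 1 \<and> lam * D \<le> c / 20 \<and> lam * F / b \<le> 1/100"
proof -
  define lam where "lam = min (1/2) (min (c / (20 * (D + 1))) (b / (100 * (F + 1))))"
  have l0: "0 < lam" unfolding lam_def using c0 b0 D0 F0 by simp
  have l1: "lam < 1" unfolding lam_def by simp
  have lD: "lam \<le> c / (20 * (D + 1))" unfolding lam_def by simp
  have lF: "lam \<le> b / (100 * (F + 1))" unfolding lam_def by simp
  have "lam * D \<le> c / (20 * (D + 1)) * D" using lD D0 by (rule mult_right_mono)
  also have "\<dots> \<le> c / 20"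
  proof -
    have "c / (20 * (D + 1)) * D = c / 20 * (D / (D + 1))" using D0 by (simp add: field_simps)
    also have "\<dots> \<le> c / 20 * 1" using c0 D0 by (intro mult_left_mono) simp_all
    finally show ?thesis by simp
  qed
  finally have h2: "lam * D \<le> c / 20" .
  have "lam * F \<le> b / (100 * (F + 1)) * F" using lF F0 by (rule mult_right_mono)
  also have "\<dots> \<le> b / 100"
  proof -
    have "b / (100 * (F + 1)) * F = b / 100 * (F / (F + 1))" using F0 by (simp add: field_simps)
    also have "\<dots> \<le> b / 100 * 1" using b0 F0 by (intro mult_left_mono) simp_all
    finally show ?thesis by simp
  qed
  finally have "lam * F \<le> b / 100" .
  hence "lam * F / b \<le> (b / 100) / b" using b0 by (intro divide_right_mono) simp_all
  hence h3: "lam * F / b \<le> 1/100" using b0 by simp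
  show ?thesis using l0 l1 h2 h3 by blast
qed

lemma real_le_two_pow: "real n \<le> 2 ^ n"
proof -
  have "n < 2 ^ n" by (rule less_exp)
  hence "real n \<le> real (2 ^ n)" by simp
  thus ?thesis by simp
qed

theorem theorem4p13:
  fixes s k K :: nat and R \<delta> \<alpha> :: real
  assumes "s \<ge> 2" and "0 < R" and "R \<le> 1"
    and "0 < \<delta>" and "\<delta> < 1 / (real s - 1)"
    and "0 \<le> \<alpha>" and "\<alpha> < 1"
  shows "\<exists>lam>0. \<forall>(V :: 'v set) E T (w :: 'v set set \<Rightarrow> real).
           two_layer_system s k K V E T \<longrightarrow> (\<forall>\<sigma>\<in>T. w \<sigma> > 0) \<longrightarrow>
           R_nint T \<ge> R \<longrightarrow> HDE_system V E T w lam \<longrightarrow>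
           unique_neighbor_expansion V E T w \<delta> \<alpha>
             (min (R\<^sup>2 * (1 - \<alpha>) * (1 - (real s - 1) * \<delta>) / 4 * (1 / real K))
                  (7 * (1 - \<alpha>)\<^sup>2 * (1 - (real s - 1) * \<delta>) ^ 3
                    / (64 * (1 + 15 * (real s - 1) * \<delta>) * real s ^ 3 * (real s - 1) ^ 4)
                    * (1 / (real k)\<^sup>2)))"
proof -
  note s2 = assms(1) and R = assms(2,3) and d0 = assms(4) and dlt = assms(5) and al = assms(6,7)
  define be where "be = (real s - 1) * \<delta>"
  define c where "c = (1 - \<alpha>) * (1 - be)"
  define C where "C = (real s - 1)\<^sup>2"
  have s1: "0 < real s - 1" using s2 by simp
  have be0: "0 < be" unfolding be_def using s1 d0 by simp
  have be1: "be < 1" unfolding be_def using dlt s1 by (simp add: less_divide_eq mult.commute)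
  have c0: "0 < c" unfolding c_def using al be1 by simp
  have C0: "0 < C" unfolding C_def using s1 by simp
  define M where "M = nat \<lceil>20 * real k * be / c\<rceil>"
  have MM: "20 * real k * be / c \<le> real M" unfolding M_def by linarith
  have H4: "real k * be / 2 ^ M \<le> c / 20"
  proof -
    have "20 * real k * be / c \<le> 2 ^ M" using MM real_le_two_pow[of M] by linarith
    hence "20 * real k * be \<le> 2 ^ M * c" using c0 by (simp add: divide_le_eq)
    thus ?thesis using c0 by (simp add: divide_le_eq field_simps)
  qed
  obtain lam where lam: "0 < lam" "lam < 1"
    and H2: "lam * (real K + (real s - 1) * real k + real M * real k * C) \<le> c / 20"
    and H3: "lam * (real k * C * 2 ^ M) / be \<le> 1/100"
    using lam_choice[OF c0 be0, of "real K + (real s - 1) * real k + real M * real k * C" "real k * C * 2 ^ M"]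
      s1 C0 by auto
  show ?thesis
  proof (intro exI[of _ lam] conjI allI impI)
    show "0 < lam" by (rule lam(1))
    fix V :: "'v set" and E T and w :: "'v set set \<Rightarrow> real"
    assume tls: "two_layer_system s k K V E T" and wp: "\<forall>\<sigma>\<in>T. w \<sigma> > 0"
      and Rn: "R_nint T \<ge> R" and HDE: "HDE_system V E T w lam"
    interpret TLS s k K V E T w using tls wp by unfold_locales auto
    show "unique_neighbor_expansion V E T w \<delta> \<alpha>
             (min (R\<^sup>2 * (1 - \<alpha>) * (1 - (real s - 1) * \<delta>) / 4 * (1 / real K))
                  (7 * (1 - \<alpha>)\<^sup>2 * (1 - (real s - 1) * \<delta>) ^ 3
                    / (64 * (1 + 15 * (real s - 1) * \<delta>) * real s ^ 3 * (real s - 1) ^ 4)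
                    * (1 / (real k)\<^sup>2)))"
      unfolding unique_neighbor_expansion_def
    proof (intro allI impI)
      fix A assume AE: "A \<subseteq> E" and Ane: "A \<noteq> {}" and ls: "locally_small V E T w \<delta> \<alpha> A"
        and small: "wSet T w A / wSet T w E < min (R\<^sup>2 * (1 - \<alpha>) * (1 - (real s - 1) * \<delta>) / 4 * (1 / real K))
                  (7 * (1 - \<alpha>)\<^sup>2 * (1 - (real s - 1) * \<delta>) ^ 3
                    / (64 * (1 + 15 * (real s - 1) * \<delta>) * real s ^ 3 * (real s - 1) ^ 4)
                    * (1 / (real k)\<^sup>2))"
      show "\<exists>\<sigma>\<in>T. card (A \<inter> \<sigma>) = 1"
      proof (rule ccontr)
        assume "\<not> (\<exists>\<sigma>\<in>T. card (A \<inter> \<sigma>) = 1)"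
        hence noU: "\<forall>\<sigma>\<in>T. card (A \<inter> \<sigma>) \<noteq> 1" by blast
        show False
        proof (rule core[OF s2 d0 _ al R lam _ _ _ Rn HDE AE Ane ls small noU])
          show "(real s - 1) * \<delta> < 1" using be1 unfolding be_def .
          show "lam * (real K + (real s - 1) * real k + real M * real k * (real s - 1)\<^sup>2)
               \<le> (1 - \<alpha>) * (1 - (real s - 1) * \<delta>) / 20" using H2 unfolding c_def be_def C_def .
          show "lam * real k * (real s - 1)\<^sup>2 * 2 ^ M / ((real s - 1) * \<delta>) \<le> 1/100"
            using H3 unfolding be_def C_def by (simp add: mult.assoc)
          show "real k * ((real s - 1) * \<delta>) / 2 ^ M \<le> (1 - \<alpha>) * (1 - (real s - 1) * \<delta>) / 20"
            using H4 unfolding c_def be_def .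
        qed
      qed
    qed
  qed
qed

end
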